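(* Assume $\beta\ge 0$ and $\zeta_l+\zeta_r>0$. Then $$\mathcal{J}_\beta(N)=4(\alpha_{in}^l\alpha_{out}^r-\alpha_{out}^l\alpha_{in}^r)\int_0^\infty\langle e_1,T_t(p_N)e_1\rangle\,dt=-4(\alpha_{in}^l\alpha_{out}^r-\alpha_{out}^l\alpha_{in}^r)\langle e_1,l^{-1}(p_N)e_1\rangle .$$
   Context: Fix an integer $N\ge 2$ and a bounded function $v:\mathbb{N}=\{1,2,\dots\}\to\mathbb{R}$. Let $e_1,\dots,e_N$ be the standard basis of $\mathbb{C}^N$, with inner product $\langle x,y\rangle=\sum_i\overline{x_i}y_i$, and $p_n=|e_n\rangle\langle e_n|$. Let $h$ be the Hermitian $N\times N$ matrix $(h\psi)(n)=-\psi(n+1)-\psi(n-1)+v(n)\psi(n)$, $n=1,\dots,N$, with $\psi(0)=\psi(N+1)=0$. Let $\alpha_{in}^l,\alpha_{out}^l,\alpha_{in}^r,\alpha_{out}^r,\beta\ge 0$ and $\zeta_l=\alpha_{in}^l+\alpha_{out}^l$, $\zeta_r=\alpha_{in}^r+\alpha_{out}^r$. Define $l:M_N(\mathbb{C})\to M_N(\mathbb{C})$ by $l(a)=-i[h,a]-\{\zeta_l p_1+\zeta_r p_N,a\}+\beta\left(\sum_{n=1}^N p_nap_n-a\right)$ ($[x,y]=xy-yx$, $\{x,y\}=xy+yx$), and $T_t=e^{tl}$, $t\ge0$. Under the hypotheses, all eigenvalues of $l$ have negative real part, so $l$ is invertible and $R_\infty=\int_0^\infty T_s(2\alpha_{in}^l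 p_1+2\alpha_{in}^r p_N)\,ds$ converges. The stationary current is defined as $\mathcal{J}_\beta(N)=2\,\mathrm{Im}\langle e_2,R_\infty e_1\rangle$. *)

theory Defs
  imports "HOL-Analysis.Analysis"
begin

text \<open>N x N complex matrices are represented as functions nat => nat => complex,
  indices 1..N (entries outside {1..N}^2 are irrelevant / zero).
  Entry (i,j) is the matrix element <e_i, a e_j>.\<close>

type_synonym cmat = "nat \<Rightarrow> nat \<Rightarrow> complex"

definition supported :: "nat \<Rightarrow> cmat \<Rightarrow> bool" where
  "supported N a \<longleftrightarrow> (\<forall>i j. i \<notin> {1..N} \<or> j \<notin> {1..N} \<longrightarrow> a i j = 0)"

definition mmul :: "nat \<Rightarrow> cmat \<Rightarrow> cmat \<Rightarrow> cmat" where
  "mmul N a b = (\<lambda>i j. \<Sum>k\<in>{1..N}. a i k * b k j)"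

definition proj :: "nat \<Rightarrow> cmat" where
  "proj n = (\<lambda>i j. if i = n \<and> j = n then 1 else 0)"

definition hmat :: "nat \<Rightarrow> (nat \<Rightarrow> real) \<Rightarrow> cmat" where
  "hmat N v = (\<lambda>i j. if i \<in> {1..N} \<and> j \<in> {1..N} then
      (if i = j then complex_of_real (v i) else if i = j + 1 \<or> j = i + 1 then -1 else 0)
    else 0)"

definition lgen :: "nat \<Rightarrow> (nat \<Rightarrow> real) \<Rightarrow> real \<Rightarrow> real \<Rightarrow> real \<Rightarrow> cmat \<Rightarrow> cmat" where
  "lgen N v zl zr \<beta> a = (\<lambda>i j.
      - \<i> * (mmul N (hmat N v) a i j - mmul N a (hmat N v) i j)
      - (mmul N (\<lambda>p q. complex_of_real zl * proj 1 p q + complex_of_real zr * proj N p q) a i j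
         + mmul N a (\<lambda>p q. complex_of_real zl * proj 1 p q + complex_of_real zr * proj N p q) i j)
      + complex_of_real \<beta> * ((\<Sum>n\<in>{1..N}. mmul N (mmul N (proj n) a) (proj n) i j) - a i j))"

definition Tsg :: "nat \<Rightarrow> (nat \<Rightarrow> real) \<Rightarrow> real \<Rightarrow> real \<Rightarrow> real \<Rightarrow> real \<Rightarrow> cmat \<Rightarrow> cmat" where
  "Tsg N v zl zr \<beta> t a = (\<lambda>i j.
      \<Sum>k. complex_of_real (t ^ k / fact k) * ((lgen N v zl zr \<beta> ^^ k) a i j))"

definition linv :: "nat \<Rightarrow> (nat \<Rightarrow> real) \<Rightarrow> real \<Rightarrow> real \<Rightarrow> real \<Rightarrow> cmat \<Rightarrow> cmat" where
  "linv N v zl zr \<beta> y = (THE b. supported N b \<and> lgen N v zl zr \<beta> b = y)"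

definition Rinf :: "nat \<Rightarrow> (nat \<Rightarrow> real) \<Rightarrow> real \<Rightarrow> real \<Rightarrow> real \<Rightarrow> real \<Rightarrow> real \<Rightarrow> cmat" where
  "Rinf N v zl zr \<beta> ainl ainr = (\<lambda>i j. integral {0..} (\<lambda>s.
      Tsg N v zl zr \<beta> s (\<lambda>p q. complex_of_real (2 * ainl) * proj 1 p q
                              + complex_of_real (2 * ainr) * proj N p q) i j))"

definition current :: "nat \<Rightarrow> (nat \<Rightarrow> real) \<Rightarrow> real \<Rightarrow> real \<Rightarrow> real \<Rightarrow> real \<Rightarrow> real \<Rightarrow> real" where
  "current N v zl zr \<beta> ainl ainr = 2 * Im (Rinf N v zl zr \<beta> ainl ainr 2 1)"

end

theory Submission
  imports Defs "Jordan_Normal_Form.Spectral_Radius"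
begin


locale setting =
  fixes N :: nat and v :: "nat \<Rightarrow> real" and zl zr \<beta> :: real
  assumes N2: "N \<ge> 2" and zl: "zl \<ge> 0" and zr: "zr \<ge> 0" and bet: "\<beta> \<ge> 0"
    and pos: "zl + zr > 0"
begin

abbreviation L where "L \<equiv> lgen N v zl zr \<beta>"

definition dd :: "nat \<Rightarrow> complex" where
  "dd i = (if i = 1 then of_real zl else 0) + (if i = N then of_real zr else 0)"

lemma mif1[simp]: "(c::complex) * (if P then 1 else 0) = (if P then c else 0)" by simp
lemma mif2[simp]: "(if P then (x::complex) else 0) * y = (if P then x * y else 0)" by simp
lemma mif3[simp]: "y * (if P then (x::complex) else 0) = (if P then y * x else 0)" by simp

lemma mmul_D: "i \<in> {1..N} \<Longrightarrow> mmul N (\<lambda>p q. complex_of_real zl * proj 1 p q + complex_of_real zr * proj N p q) a i j = dd i * a i j"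
  using N2 by (auto simp: mmul_def proj_def dd_def sum.distrib if_distrib[of "\<lambda>x. x * _"] cong: if_cong)

lemma pap: "n \<in> {1..N} \<Longrightarrow> mmul N (mmul N (proj n) a) (proj n) i j = (if i = n \<and> j = n then a n n else 0)"
  by (auto simp: mmul_def proj_def if_distrib[of "\<lambda>x. x * _"] cong: if_cong)

lemma sum_pap: "(\<Sum>n\<in>{1..N}. mmul N (mmul N (proj n) a) (proj n) i j) = (if i = j \<and> i \<in> {1..N} then a i i else 0)"
proof -
  have "(\<Sum>n\<in>{1..N}. mmul N (mmul N (proj n) a) (proj n) i j) = (\<Sum>n\<in>{1..N}. if n = i then (if j = i then a i i else 0) else 0)"
    by (rule sum.cong) (auto simp: pap)
  also have "\<dots> = (if i = j \<and> i \<in> {1..N} then a i i else 0)" by (subst sum.delta) auto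
  finally show ?thesis .
qed

lemma lgen_entry:
  assumes "i \<in> {1..N}" "j \<in> {1..N}"
  shows "L a i j = - \<i> * ((\<Sum>k\<in>{1..N}. hmat N v i k * a k j) - (\<Sum>k\<in>{1..N}. a i k * hmat N v k j))
     - (dd i + dd j) * a i j + of_real \<beta> * ((if i = j then a i j else 0) - a i j)"
proof -
  have "mmul N a (\<lambda>p q. complex_of_real zl * proj 1 p q + complex_of_real zr * proj N p q) i j = dd j * a i j"
    using N2 assms by (auto simp: mmul_def proj_def dd_def sum.distrib algebra_simps cong: if_cong)
  then show ?thesis using assms
    unfolding lgen_def sum_pap mmul_D[OF assms(1)] by (simp add: mmul_def algebra_simps)
qed

lemma lgen_out:
  assumes "supported N a" "i \<notin> {1..N} \<or> j \<notin> {1..N}"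
  shows "L a i j = 0"
proof -
  have a1: "a p q = 0" if "p \<notin> {1..N}" for p q using assms(1) that by (auto simp: supported_def)
  have a2: "a p q = 0" if "q \<notin> {1..N}" for p q using assms(1) that by (auto simp: supported_def)
  show ?thesis using assms(2)
  proof
    assume i: "i \<notin> {1..N}"
    have ai: "a i k = 0" for k using a1 i by auto
    have h0: "hmat N v i k = 0" for k using i by (auto simp: hmat_def)
    have p0: "proj n i k = 0" if "n \<in> {1..N}" for n k using i that by (auto simp: proj_def)
    show ?thesis using i
      apply (simp only: lgen_def sum_pap)
      using N2 apply (simp add: mmul_def h0 ai p0 proj_def)
      using N2 by (auto simp: mmul_def h0 ai p0 proj_def)

  next
    assume j: "j \<notin> {1..N}"
    have aj: "a k j = 0" for k using a2 j by auto
    have h0: "hmat N v k j = 0" for k using j by (auto simp: hmat_def)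
    have p0: "proj n k j = 0" if "n \<in> {1..N}" for n k using j that by (auto simp: proj_def)
    show ?thesis using j
      apply (simp only: lgen_def sum_pap)
      using N2 apply (simp add: mmul_def h0 aj p0 proj_def)
      using N2 by (auto simp: mmul_def h0 aj p0 proj_def)

  qed
qed

lemma lgen_add: "L (\<lambda>x y. a x y + b x y) = (\<lambda>x y. L a x y + L b x y)"
  by (simp add: lgen_def mmul_def algebra_simps sum.distrib fun_eq_iff)

lemma lgen_smult: "L (\<lambda>x y. c * a x y) = (\<lambda>x y. c * L a x y)"
  by (simp add: lgen_def mmul_def algebra_simps sum_distrib_left fun_eq_iff)

lemma lgen_zero: "L (\<lambda>x y. 0) = (\<lambda>x y. 0)"
  using lgen_smult[of 0 "\<lambda>x y. 0"] by simp

lemma lgen_sum: "L (\<lambda>x y. \<Sum>i\<in>I. f i x y) = (\<lambda>x y. \<Sum>i\<in>I. L (f i) x y)"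
proof (induction I rule: infinite_finite_induct)
  case (infinite A) then show ?case using lgen_zero by simp
next
  case empty then show ?case using lgen_zero by simp
next
  case (insert x F)
  then show ?case by (simp add: lgen_add)
qed

lemma lgen_diff: "L (\<lambda>x y. a x y - b x y) = (\<lambda>x y. L a x y - L b x y)"
  using lgen_add[of a "\<lambda>x y. (-1) * b x y"] lgen_smult[of "-1" b] by simp

definition E :: "nat \<Rightarrow> nat \<Rightarrow> cmat" where "E p q = (\<lambda>x y. if x = p \<and> y = q then 1 else 0)"

definition K :: "nat \<Rightarrow> nat \<Rightarrow> nat \<Rightarrow> nat \<Rightarrow> complex" where "K x y p q = L (E p q) x y"

lemma double_delta: "finite A \<Longrightarrow> finite B \<Longrightarrow>
   (\<Sum>p\<in>A. \<Sum>q\<in>B. if x = p \<and> y = q then g p q else 0) = (if x \<in> A \<and> y \<in> B then g x y else (0::complex))"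
proof -
  assume fin: "finite A" "finite B"
  have "(\<Sum>p\<in>A. \<Sum>q\<in>B. if x = p \<and> y = q then g p q else 0) = (\<Sum>p\<in>A. if p = x then (if y \<in> B then g x y else 0) else 0)"
    using fin by (intro sum.cong refl) (auto simp: sum.delta')
  also have "\<dots> = (if x \<in> A \<and> y \<in> B then g x y else 0)" using fin by (simp add: sum.delta)
  finally show ?thesis .
qed

lemma supported_expand: "supported N F \<Longrightarrow> F = (\<lambda>x y. \<Sum>p\<in>{1..N}. \<Sum>q\<in>{1..N}. F p q * E p q x y)"
  unfolding E_def by (auto simp: fun_eq_iff double_delta supported_def)

lemma lgen_rep: "supported N F \<Longrightarrow> L F x y = (\<Sum>p\<in>{1..N}. \<Sum>q\<in>{1..N}. F p q * K x y p q)"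
proof -
  assume F: "supported N F"
  have "L F = L (\<lambda>x y. \<Sum>p\<in>{1..N}. \<Sum>q\<in>{1..N}. F p q * E p q x y)"
    using supported_expand[OF F] by simp
  also have "\<dots> = (\<lambda>x y. \<Sum>p\<in>{1..N}. \<Sum>q\<in>{1..N}. F p q * K x y p q)"
    by (simp add: lgen_sum lgen_smult K_def)
  finally show ?thesis by simp
qed

lemma lgen_supported: "supported N a \<Longrightarrow> supported N (L a)"
  using lgen_out unfolding supported_def by blast

lemma hsym: "hmat N v i k = hmat N v k i" by (auto simp: hmat_def)
lemma hreal: "cnj (hmat N v i k) = hmat N v i k" by (auto simp: hmat_def)

lemma sum3_swap: "(\<Sum>i\<in>A. \<Sum>j\<in>B. \<Sum>k\<in>A. g k j i) = (\<Sum>i\<in>A. \<Sum>j\<in>B. \<Sum>k\<in>A. (g i j k :: complex))"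
proof -
  have "(\<Sum>i\<in>A. \<Sum>j\<in>B. \<Sum>k\<in>A. g k j i) = (\<Sum>i\<in>A. \<Sum>k\<in>A. \<Sum>j\<in>B. g k j i)"
    by (rule sum.cong[OF refl], rule sum.swap)
  also have "\<dots> = (\<Sum>k\<in>A. \<Sum>i\<in>A. \<Sum>j\<in>B. g k j i)" by (rule sum.swap)
  also have "\<dots> = (\<Sum>k\<in>A. \<Sum>j\<in>B. \<Sum>i\<in>A. g k j i)" by (rule sum.cong[OF refl], rule sum.swap)
  finally show ?thesis .
qed

lemma T_real:
  "cnj (\<Sum>i\<in>{1..N}. \<Sum>j\<in>{1..N}. cnj (a i j) * ((\<Sum>k\<in>{1..N}. hmat N v i k * a k j) - (\<Sum>k\<in>{1..N}. a i k * hmat N v k j)))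
   = (\<Sum>i\<in>{1..N}. \<Sum>j\<in>{1..N}. cnj (a i j) * ((\<Sum>k\<in>{1..N}. hmat N v i k * a k j) - (\<Sum>k\<in>{1..N}. a i k * hmat N v k j)))"
proof -
  let ?A = "{1..N}"
  let ?g1 = "\<lambda>i j k. cnj (a i j) * (hmat N v i k * a k j)"
  let ?g2 = "\<lambda>i j k. cnj (a i j) * (a i k * hmat N v k j)"
  have e: "(\<Sum>i\<in>?A. \<Sum>j\<in>?A. cnj (a i j) * ((\<Sum>k\<in>?A. hmat N v i k * a k j) - (\<Sum>k\<in>?A. a i k * hmat N v k j)))
     = (\<Sum>i\<in>?A. \<Sum>j\<in>?A. \<Sum>k\<in>?A. ?g1 i j k) - (\<Sum>i\<in>?A. \<Sum>j\<in>?A. \<Sum>k\<in>?A. ?g2 i j k)"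
    by (simp add: right_diff_distrib sum_distrib_left sum_subtractf)
  have c1: "cnj (\<Sum>i\<in>?A. \<Sum>j\<in>?A. \<Sum>k\<in>?A. ?g1 i j k) = (\<Sum>i\<in>?A. \<Sum>j\<in>?A. \<Sum>k\<in>?A. ?g1 k j i)"
  proof -
    have pw: "cnj (?g1 i j k) = ?g1 k j i" for i j k by (simp add: hreal hsym[of k i] mult_ac)
    have "cnj (\<Sum>i\<in>?A. \<Sum>j\<in>?A. \<Sum>k\<in>?A. ?g1 i j k) = (\<Sum>i\<in>?A. \<Sum>j\<in>?A. \<Sum>k\<in>?A. cnj (?g1 i j k))"
      by (simp only: cnj_sum)
    also have "\<dots> = (\<Sum>i\<in>?A. \<Sum>j\<in>?A. \<Sum>k\<in>?A. ?g1 k j i)" by (intro sum.cong refl) (rule pw)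
    finally show ?thesis .
  qed
  have c2: "cnj (\<Sum>i\<in>?A. \<Sum>j\<in>?A. \<Sum>k\<in>?A. ?g2 i j k) = (\<Sum>i\<in>?A. \<Sum>j\<in>?A. \<Sum>k\<in>?A. ?g2 i k j)"
  proof -
    have pw: "cnj (?g2 i j k) = ?g2 i k j" for i j k by (simp add: hreal hsym[of k j] mult_ac)
    have "cnj (\<Sum>i\<in>?A. \<Sum>j\<in>?A. \<Sum>k\<in>?A. ?g2 i j k) = (\<Sum>i\<in>?A. \<Sum>j\<in>?A. \<Sum>k\<in>?A. cnj (?g2 i j k))"
      by (simp only: cnj_sum)
    also have "\<dots> = (\<Sum>i\<in>?A. \<Sum>j\<in>?A. \<Sum>k\<in>?A. ?g2 i k j)" by (intro sum.cong refl) (rule pw)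
    finally show ?thesis .
  qed
  have c2': "(\<Sum>i\<in>?A. \<Sum>j\<in>?A. \<Sum>k\<in>?A. ?g2 i k j) = (\<Sum>i\<in>?A. \<Sum>j\<in>?A. \<Sum>k\<in>?A. ?g2 i j k)"
    by (rule sum.cong[OF refl], rule sum.swap)
  show ?thesis unfolding e using c1 c2 c2' sum3_swap[of ?g1 ?A ?A] by simp
qed

lemma hrow_up:
  assumes m: "m \<in> {1..N}" "m + 1 \<le> N" and z: "\<And>k. k \<in> {1..N} \<Longrightarrow> k \<le> m \<Longrightarrow> a k j = 0"
  shows "(\<Sum>k\<in>{1..N}. hmat N v m k * a k j) = - a (m+1) j"
proof -
  have "(\<Sum>k\<in>{1..N}. hmat N v m k * a k j) = (\<Sum>k\<in>{1..N}. if k = m + 1 then - a (m+1) j else 0)"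
  proof (rule sum.cong[OF refl])
    fix k assume k: "k \<in> {1..N}"
    show "hmat N v m k * a k j = (if k = m + 1 then - a (m+1) j else 0)"
    proof (cases "k \<le> m")
      case True then show ?thesis using z[OF k] by simp
    next
      case False then show ?thesis using k m by (auto simp: hmat_def)
    qed
  qed
  also have "\<dots> = - a (m+1) j" using m by (simp add: sum.delta)
  finally show ?thesis .
qed

lemma hrow_down:
  assumes m: "m \<in> {1..N}" "m \<ge> 2" and z: "\<And>k. k \<in> {1..N} \<Longrightarrow> k \<ge> m \<Longrightarrow> a k j = 0"
  shows "(\<Sum>k\<in>{1..N}. hmat N v m k * a k j) = - a (m-1) j"
proof -
  have "(\<Sum>k\<in>{1..N}. hmat N v m k * a k j) = (\<Sum>k\<in>{1..N}. if k = m - 1 then - a (m-1) j else 0)"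
  proof (rule sum.cong[OF refl])
    fix k assume k: "k \<in> {1..N}"
    show "hmat N v m k * a k j = (if k = m - 1 then - a (m-1) j else 0)"
    proof (cases "k \<ge> m")
      case True then show ?thesis using z[OF k] m by simp
    next
      case False then show ?thesis using k m by (auto simp: hmat_def)
    qed
  qed
  also have "\<dots> = - a (m-1) j"
  proof -
    have "m - 1 \<in> {1..N}" using m by auto
    then show ?thesis by (simp add: sum.delta)
  qed
  finally show ?thesis .
qed

lemma hrow_zero:
  assumes z: "\<And>k. k \<in> {1..N} \<Longrightarrow> a m k = 0"
  shows "(\<Sum>k\<in>{1..N}. a m k * hmat N v k j) = 0"
  using z by simp

definition ddr :: "nat \<Rightarrow> real" where
  "ddr i = (if i = 1 then zl else 0) + (if i = N then zr else 0)"

lemma dd_ddr: "dd i = of_real (ddr i)" by (simp add: dd_def ddr_def)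
lemma ddr_nn: "ddr i \<ge> 0" using zl zr by (simp add: ddr_def)

lemma eigen_neg:
  assumes sa: "supported N a" and ev: "\<And>x y. L a x y = \<mu> * a x y" and nz: "a i0 j0 \<noteq> 0"
  shows "Re \<mu> < 0"
proof -
  let ?A = "{1..N}"
  let ?h = "hmat N v"
  define C where "C i j = (\<Sum>k\<in>?A. ?h i k * a k j) - (\<Sum>k\<in>?A. a i k * ?h k j)" for i j
  define ns where "ns i j = (cmod (a i j))^2" for i j
  define P where "P i j = (ddr i + ddr j) * ns i j + \<beta> * (if i = j then 0 else ns i j)" for i j
  have Pnn: "P i j \<ge> 0" for i j using ddr_nn[of i] ddr_nn[of j] bet by (simp add: P_def ns_def)
  have cc: "cnj z * z = of_real ((cmod z)^2)" for z :: complex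
    by (metis complex_norm_square mult.commute)
  have pt: "cnj (a i j) * L a i j = -\<i> * (cnj (a i j) * C i j) - of_real (P i j)" if "i \<in> ?A" "j \<in> ?A" for i j
  proof -
    have w: "cnj (a i j) * a i j = of_real (ns i j)" by (simp add: cc ns_def)
    have e: "cnj (a i j) * L a i j = -\<i> * (cnj (a i j) * C i j) - (dd i + dd j) * of_real (ns i j)
        + of_real \<beta> * ((if i = j then of_real (ns i j) else 0) - of_real (ns i j))"
      unfolding lgen_entry[OF that] C_def w[symmetric] by (cases "i = j") (simp_all add: algebra_simps)
    show ?thesis unfolding e P_def dd_ddr by (cases "i = j") (simp_all add: algebra_simps)
  qed
  define T where "T = (\<Sum>i\<in>?A. \<Sum>j\<in>?A. cnj (a i j) * C i j)"
  have Treal: "Im T = 0"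
  proof -
    have "cnj T = T" unfolding T_def C_def by (rule T_real)
    then show ?thesis by (metis Reals_cnj_iff complex_is_Real_iff)
  qed
  have S1: "(\<Sum>i\<in>?A. \<Sum>j\<in>?A. cnj (a i j) * L a i j) = -\<i> * T - of_real (\<Sum>i\<in>?A. \<Sum>j\<in>?A. P i j)"
    by (simp add: pt T_def sum_subtractf sum_distrib_left)
  have S2: "(\<Sum>i\<in>?A. \<Sum>j\<in>?A. cnj (a i j) * L a i j) = \<mu> * of_real (\<Sum>i\<in>?A. \<Sum>j\<in>?A. ns i j)"
  proof -
    have "cnj (a i j) * L a i j = \<mu> * of_real (ns i j)" for i j
      using cc[of "a i j"] by (simp add: ev ns_def mult_ac)
    then show ?thesis by (simp add: sum_distrib_left)
  qed
  have key: "Re \<mu> * (\<Sum>i\<in>?A. \<Sum>j\<in>?A. ns i j) = - (\<Sum>i\<in>?A. \<Sum>j\<in>?A. P i j)"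
  proof -
    have "Re (\<mu> * of_real (\<Sum>i\<in>?A. \<Sum>j\<in>?A. ns i j)) = Re (-\<i> * T - of_real (\<Sum>i\<in>?A. \<Sum>j\<in>?A. P i j))"
      using S1 S2 by simp
    then show ?thesis using Treal by simp
  qed
  have i0: "i0 \<in> ?A" "j0 \<in> ?A" using sa nz unfolding supported_def by auto
  have nspos: "(\<Sum>i\<in>?A. \<Sum>j\<in>?A. ns i j) > 0"
  proof -
    have "ns i0 j0 > 0" using nz by (simp add: ns_def)
    also have "ns i0 j0 \<le> (\<Sum>j\<in>?A. ns i0 j)" using i0 by (intro member_le_sum) (auto simp: ns_def)
    also have "\<dots> \<le> (\<Sum>i\<in>?A. \<Sum>j\<in>?A. ns i j)" using i0
      by (intro member_le_sum[where f = "\<lambda>i. \<Sum>j\<in>?A. ns i j"] sum_nonneg) (auto simp: ns_def)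
    finally show ?thesis .
  qed
  show ?thesis
  proof (rule ccontr)
    assume "\<not> Re \<mu> < 0"
    moreover have "(\<Sum>i\<in>?A. \<Sum>j\<in>?A. P i j) \<ge> 0" by (intro sum_nonneg Pnn)
    ultimately have "(\<Sum>i\<in>?A. \<Sum>j\<in>?A. P i j) = 0" using key nspos
      by (smt (verit) mult_nonneg_nonneg)
    then have P0: "P i j = 0" if "i \<in> ?A" "j \<in> ?A" for i j
      using that Pnn by (simp add: sum_nonneg_eq_0_iff sum_nonneg)
    have ns0: "(ddr i + ddr j) * ns i j = 0" "\<beta> * (if i = j then 0 else ns i j) = 0" if "i \<in> ?A" "j \<in> ?A" for i j
      using P0[OF that] ddr_nn[of i] ddr_nn[of j] bet
      by (simp_all add: P_def ns_def add_nonneg_eq_0_iff)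
    have eq: "-\<i> * C i j = \<mu> * a i j" if "i \<in> ?A" "j \<in> ?A" for i j
    proof -
      have d0: "(dd i + dd j) * a i j = 0"
        using ns0(1)[OF that] by (auto simp: dd_ddr ns_def simp flip: of_real_add)
      have b0: "of_real \<beta> * ((if i = j then a i j else 0) - a i j) = 0"
        using ns0(2)[OF that] by (auto simp: ns_def)
      show ?thesis using lgen_entry[OF that, of a] ev[of i j] d0 b0 by (simp add: C_def)
    qed
    have allzero: "a i j = 0" if "i \<in> ?A" "j \<in> ?A" for i j
    proof (cases "zl > 0")
      case True
      have "\<forall>j\<in>?A. a m j = 0" if "m \<in> ?A" for m
        using that
      proof (induction m rule: less_induct)
        case (less m)
        show ?case
        proof (cases "m = 1")
          case True
          show ?thesis
          proof
            fix j assume j: "j \<in> ?A"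
            have "(ddr 1 + ddr j) * ns 1 j = 0" using ns0[of 1 j] j N2 by auto
            moreover have "ddr 1 + ddr j > 0" using \<open>zl > 0\<close> ddr_nn[of j] zr by (simp add: ddr_def)
            ultimately show "a m j = 0" using True by (simp add: ns_def)
          qed
        next
          case False
          then obtain m' where m': "m = m' + 1" "m' \<in> ?A" using less.prems by (cases m) auto
          have z: "a k j = 0" if "k \<in> ?A" "k \<le> m'" "j \<in> ?A" for k j
            using less.IH[of k] that m' by auto
          show ?thesis
          proof
            fix j assume j: "j \<in> ?A"
            have "C m' j = - a m j"
              unfolding C_def using hrow_up[of m' a j] m' less.prems z[OF _ _ j] z[of m' _] by auto
            moreover have "a m' j = 0" using z[of m' j] m' j by auto
            ultimately show "a m j = 0" using eq[of m' j] m' j by simp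
          qed
        qed
      qed
      then show ?thesis using that by auto
    next
      case False
      then have zr0: "zr > 0" using pos zl by auto
      have "\<forall>j\<in>?A. a m j = 0" if "m \<in> ?A" for m
      proof -
        have "\<forall>m. m \<in> ?A \<longrightarrow> N - m = d \<longrightarrow> (\<forall>j\<in>?A. a m j = 0)" for d
        proof (induction d rule: less_induct)
          case (less d)
          show ?case
          proof (intro allI impI)
            fix m assume m: "m \<in> ?A" "N - m = d"
            show "\<forall>j\<in>?A. a m j = 0"
            proof (cases "m = N")
              case True
              show ?thesis
              proof
                fix j assume j: "j \<in> ?A"
                have "(ddr N + ddr j) * ns N j = 0" using ns0[of N j] j N2 by auto
                moreover have "ddr N + ddr j > 0" using zr0 ddr_nn[of j] zl N2 by (simp add: ddr_def)
                ultimately show "a m j = 0" using True by (simp add: ns_def)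
              qed
            next
              case False
              define m' where "m' = m + 1"
              have m': "m' \<in> ?A" "m' \<ge> 2" "m = m' - 1" using m False by (auto simp: m'_def)
              have z: "a k j = 0" if "k \<in> ?A" "k \<ge> m'" "j \<in> ?A" for k j
                using less.IH[of "N - k"] that m' m by auto
              show ?thesis
              proof
                fix j assume j: "j \<in> ?A"
                have "C m' j = - a m j"
                  unfolding C_def using hrow_down[of m' a j] m' z[OF _ _ j] z[of m' _] by auto
                moreover have "a m' j = 0" using z[of m' j] m' j by auto
                ultimately show "a m j = 0" using eq[of m' j] m' j by simp
              qed
            qed
          qed
        qed
        then show ?thesis using that by blast
      qed
      then show ?thesis using that by auto
    qed
    then show False using nz i0 by auto
  qed
qed

lemma sum_dd: "(\<Sum>i\<in>{1..N}. dd i * f i) = of_real zl * f 1 + of_real zr * f N"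
  using N2 by (simp add: dd_def distrib_right sum.distrib if_distrib[of "\<lambda>x. x * _"] sum.delta cong: if_cong)

lemma lgen_trace:
  assumes "supported N a"
  shows "(\<Sum>i\<in>{1..N}. L a i i) = -2 * (of_real zl * a 1 1 + of_real zr * a N N)"
proof -
  let ?A = "{1..N}"
  let ?h = "hmat N v"
  have c: "(\<Sum>i\<in>?A. \<Sum>k\<in>?A. ?h i k * a k i) = (\<Sum>i\<in>?A. \<Sum>k\<in>?A. a i k * ?h k i)"
    by (subst sum.swap) (simp add: mult.commute)
  have "(\<Sum>i\<in>?A. L a i i) = (\<Sum>i\<in>?A. - \<i> * ((\<Sum>k\<in>?A. ?h i k * a k i) - (\<Sum>k\<in>?A. a i k * ?h k i)) - 2 * (dd i * a i i))"
    by (intro sum.cong refl) (simp add: lgen_entry algebra_simps)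
  also have "\<dots> = - \<i> * ((\<Sum>i\<in>?A. \<Sum>k\<in>?A. ?h i k * a k i) - (\<Sum>i\<in>?A. \<Sum>k\<in>?A. a i k * ?h k i)) - 2 * (\<Sum>i\<in>?A. dd i * a i i)"
    by (simp add: sum_subtractf sum_distrib_left right_diff_distrib sum_negf)
  also have "\<dots> = -2 * (of_real zl * a 1 1 + of_real zr * a N N)"
    unfolding c sum_dd by simp
  finally show ?thesis .
qed

lemma lgen_bilin:
  assumes "supported N a" "supported N b"
  shows "(\<Sum>i\<in>{1..N}. \<Sum>j\<in>{1..N}. L a i j * b i j) = (\<Sum>i\<in>{1..N}. \<Sum>j\<in>{1..N}. a i j * L b i j)"
proof -
  let ?A = "{1..N}"
  let ?h = "hmat N v"
  define R where "R i j = - (dd i + dd j) * a i j * b i j + of_real \<beta> * ((if i = j then a i j * b i j else 0) - a i j * b i j)" for i j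
  let ?g1 = "\<lambda>i j k. ?h i k * a k j * b i j"
  let ?g2 = "\<lambda>i j k. a i k * ?h k j * b i j"
  have l: "(\<Sum>i\<in>?A. \<Sum>j\<in>?A. L a i j * b i j) = - \<i> * ((\<Sum>i\<in>?A. \<Sum>j\<in>?A. \<Sum>k\<in>?A. ?g1 i j k) - (\<Sum>i\<in>?A. \<Sum>j\<in>?A. \<Sum>k\<in>?A. ?g2 i j k)) + (\<Sum>i\<in>?A. \<Sum>j\<in>?A. R i j)"
  proof -
    have "L a i j * b i j = - \<i> * ((\<Sum>k\<in>?A. ?g1 i j k) - (\<Sum>k\<in>?A. ?g2 i j k)) + R i j" if "i \<in> ?A" "j \<in> ?A" for i j
      unfolding lgen_entry[OF that] R_def by (simp add: algebra_simps sum_distrib_left sum_distrib_right)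
    then have "(\<Sum>i\<in>?A. \<Sum>j\<in>?A. L a i j * b i j) = (\<Sum>i\<in>?A. \<Sum>j\<in>?A. - \<i> * ((\<Sum>k\<in>?A. ?g1 i j k) - (\<Sum>k\<in>?A. ?g2 i j k)) + R i j)"
      by (intro sum.cong refl) auto
    then show ?thesis by (simp add: sum.distrib sum_subtractf sum_distrib_left right_diff_distrib sum_negf)
  qed
  have r: "(\<Sum>i\<in>?A. \<Sum>j\<in>?A. a i j * L b i j) = - \<i> * ((\<Sum>i\<in>?A. \<Sum>j\<in>?A. \<Sum>k\<in>?A. ?g1 k j i) - (\<Sum>i\<in>?A. \<Sum>j\<in>?A. \<Sum>k\<in>?A. ?g2 i k j)) + (\<Sum>i\<in>?A. \<Sum>j\<in>?A. R i j)"
  proof -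
    have "a i j * L b i j = - \<i> * ((\<Sum>k\<in>?A. ?g1 k j i) - (\<Sum>k\<in>?A. ?g2 i k j)) + R i j" if "i \<in> ?A" "j \<in> ?A" for i j
      unfolding lgen_entry[OF that] R_def by (simp add: algebra_simps sum_distrib_left sum_distrib_right hsym)
    then have "(\<Sum>i\<in>?A. \<Sum>j\<in>?A. a i j * L b i j) = (\<Sum>i\<in>?A. \<Sum>j\<in>?A. - \<i> * ((\<Sum>k\<in>?A. ?g1 k j i) - (\<Sum>k\<in>?A. ?g2 i k j)) + R i j)"
      by (intro sum.cong refl) auto
    then show ?thesis by (simp add: sum.distrib sum_subtractf sum_distrib_left right_diff_distrib sum_negf)
  qed
  have s2: "(\<Sum>i\<in>?A. \<Sum>j\<in>?A. \<Sum>k\<in>?A. ?g2 i k j) = (\<Sum>i\<in>?A. \<Sum>j\<in>?A. \<Sum>k\<in>?A. ?g2 i j k)"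
    by (rule sum.cong[OF refl], rule sum.swap)
  show ?thesis unfolding l r s2 sum3_swap[of ?g1 ?A ?A] ..
qed

lemma lgen_adj:
  assumes sa: "supported N a"
  shows "L (\<lambda>x y. cnj (a y x)) = (\<lambda>x y. cnj (L a y x))"
proof (intro ext)
  fix i j
  have sb: "supported N (\<lambda>x y. cnj (a y x))" using sa by (auto simp: supported_def)
  show "L (\<lambda>x y. cnj (a y x)) i j = cnj (L a j i)"
  proof (cases "i \<in> {1..N} \<and> j \<in> {1..N}")
    case True
    have cd: "cnj (dd i) = dd i" for i by (simp add: dd_def)
    have ij: "i \<in> {1..N}" "j \<in> {1..N}" using True by auto
    show ?thesis
      unfolding lgen_entry[OF ij] lgen_entry[OF ij(2) ij(1)]
      by (simp add: cnj_sum hreal hsym[of i] hsym[of _ j] cd algebra_simps)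
  next
    case False
    then show ?thesis using lgen_out[OF sa] lgen_out[OF sb] by auto
  qed
qed

end



lemma mv_entry: "A \<in> carrier_mat n n \<Longrightarrow> v \<in> carrier_vec n \<Longrightarrow> i < n \<Longrightarrow>
   (A *\<^sub>v v) $ i = (\<Sum>j<n. A $$ (i,j) * v $ j)"
  by (simp add: scalar_prod_def Matrix.row_def lessThan_atLeast0)

lemma smult_smult_mat: "a \<cdot>\<^sub>m (b \<cdot>\<^sub>m A) = (a * b :: 'a :: comm_semiring_0) \<cdot>\<^sub>m A"
  by (rule eq_matI) (auto simp: mult.assoc)

lemma pow_smult: "A \<in> carrier_mat n n \<Longrightarrow> (c \<cdot>\<^sub>m A) ^\<^sub>m k = (c ^ k :: 'a :: comm_ring_1) \<cdot>\<^sub>m (A ^\<^sub>m k)"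
proof (induction k)
  case 0 then show ?case by (intro eq_matI) auto
next
  case (Suc k)
  have "(c \<cdot>\<^sub>m A) ^\<^sub>m Suc k = (c ^ k \<cdot>\<^sub>m (A ^\<^sub>m k)) * (c \<cdot>\<^sub>m A)" using Suc by simp
  also have "\<dots> = c ^ k \<cdot>\<^sub>m ((A ^\<^sub>m k) * (c \<cdot>\<^sub>m A))"
    using Suc.prems by (intro mult_smult_assoc_mat[where nr = n and n = n and nc = n]) auto
  also have "\<dots> = c ^ k \<cdot>\<^sub>m (c \<cdot>\<^sub>m ((A ^\<^sub>m k) * A))"
    using Suc.prems by (subst mult_smult_distrib[where nr = n and n = n and nc = n]) auto
  also have "\<dots> = c ^ Suc k \<cdot>\<^sub>m (A ^\<^sub>m Suc k)" by (simp add: smult_smult_mat mult.commute)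
  finally show ?case .
qed

context setting begin

definition rw :: "nat \<Rightarrow> nat" where "rw r = r div N + 1"
definition cl :: "nat \<Rightarrow> nat" where "cl r = r mod N + 1"
definition ix :: "nat \<Rightarrow> nat \<Rightarrow> nat" where "ix p q = (p - 1) * N + (q - 1)"

lemma rw_cl_range: "r < N * N \<Longrightarrow> rw r \<in> {1..N} \<and> cl r \<in> {1..N}"
proof -
  assume r: "r < N * N"
  have "r div N < N" using r N2 by (simp add: div_less_iff_less_mult)
  moreover have "r mod N < N" using N2 by (metis mod_less_divisor not_numeral_le_zero not_gr_zero)
  ultimately have "r div N + 1 \<le> N" "r mod N + 1 \<le> N" by linarith+
  then show ?thesis unfolding rw_def cl_def by auto
qed

lemma ix_rw_cl: "r < N * N \<Longrightarrow> ix (rw r) (cl r) = r"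
  by (simp add: ix_def rw_def cl_def mult.commute)

lemma ix_range: "p \<in> {1..N} \<Longrightarrow> q \<in> {1..N} \<Longrightarrow> ix p q < N * N"
proof -
  assume p: "p \<in> {1..N}" and q: "q \<in> {1..N}"
  have "(p - 1) * N + (q - 1) < (p - 1) * N + N" using q by auto
  also have "\<dots> = p * N" using p by (cases p) auto
  also have "\<dots> \<le> N * N" using p by auto
  finally show ?thesis by (simp add: ix_def)
qed

lemma rw_ix: "p \<in> {1..N} \<Longrightarrow> q \<in> {1..N} \<Longrightarrow> rw (ix p q) = p \<and> cl (ix p q) = q"
proof -
  assume p: "p \<in> {1..N}" and q: "q \<in> {1..N}"
  have qN: "q - 1 < N" using q by auto
  have "((p - 1) * N + (q - 1)) div N = p - 1" using qN by (simp only: div_mult_self3 div_less)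
  moreover have "((p - 1) * N + (q - 1)) mod N = q - 1" using qN by (simp only: mod_mult_self3 mod_less)
  ultimately have "rw (ix p q) = p - 1 + 1 \<and> cl (ix p q) = q - 1 + 1" unfolding rw_def cl_def ix_def by (simp only:)
  then show ?thesis using p q by auto
qed

lemma reindex: "(\<Sum>r<N*N. f (rw r) (cl r)) = (\<Sum>p\<in>{1..N}. \<Sum>q\<in>{1..N}. (f p q :: 'a :: comm_monoid_add))"
proof -
  have "(\<Sum>r<N*N. f (rw r) (cl r)) = (\<Sum>pq\<in>{1..N} \<times> {1..N}. f (fst pq) (snd pq))"
    by (rule sum.reindex_bij_witness[where i = "\<lambda>pq. ix (fst pq) (snd pq)" and j = "\<lambda>r. (rw r, cl r)"])
       (auto simp: ix_rw_cl ix_range rw_ix dest: rw_cl_range)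
  also have "\<dots> = (\<Sum>p\<in>{1..N}. \<Sum>q\<in>{1..N}. f p q)"
    by (simp add: sum.cartesian_product split_def)
  finally show ?thesis .
qed

definition vecof :: "cmat \<Rightarrow> complex Matrix.vec" where
  "vecof a = Matrix.vec (N*N) (\<lambda>r. a (rw r) (cl r))"
definition Mm :: "complex Matrix.mat" where
  "Mm = Matrix.mat (N*N) (N*N) (\<lambda>(r,c). K (rw r) (cl r) (rw c) (cl c))"
definition unvec :: "complex Matrix.vec \<Rightarrow> cmat" where
  "unvec x = (\<lambda>i j. if i \<in> {1..N} \<and> j \<in> {1..N} then x $ ix i j else 0)"

lemma vecof_carrier[simp]: "vecof a \<in> carrier_vec (N*N)" by (simp add: vecof_def)
lemma Mm_carrier[simp]: "Mm \<in> carrier_mat (N*N) (N*N)" by (simp add: Mm_def)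
lemma Mm_dim[simp]: "dim_row Mm = N*N" "dim_col Mm = N*N" by (simp_all add: Mm_def)

lemma unvec_supported: "supported N (unvec x)" by (simp add: unvec_def supported_def)

lemma vecof_unvec: "x \<in> carrier_vec (N*N) \<Longrightarrow> vecof (unvec x) = x"
  by (intro eq_vecI) (auto simp: vecof_def unvec_def ix_rw_cl dest: rw_cl_range)

lemma unvec_vecof: "supported N a \<Longrightarrow> unvec (vecof a) = a"
  by (auto simp: fun_eq_iff vecof_def unvec_def ix_range rw_ix supported_def)

lemma vecof_inj: "supported N a \<Longrightarrow> supported N b \<Longrightarrow> vecof a = vecof b \<Longrightarrow> a = b"
  by (metis unvec_vecof)

lemma Mm_vecof: "supported N a \<Longrightarrow> Mm *\<^sub>v vecof a = vecof (L a)"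
proof (intro eq_vecI)
  assume sa: "supported N a"
  fix r assume "r < dim_vec (vecof (L a))"
  then have r: "r < N * N" by (simp add: vecof_def)
  have "(Mm *\<^sub>v vecof a) $ r = (\<Sum>c<N*N. K (rw r) (cl r) (rw c) (cl c) * a (rw c) (cl c))"
    using r by (simp add: Mm_def vecof_def scalar_prod_def Matrix.row_def lessThan_atLeast0)
  also have "\<dots> = (\<Sum>p\<in>{1..N}. \<Sum>q\<in>{1..N}. K (rw r) (cl r) p q * a p q)"
    by (rule reindex)
  also have "\<dots> = L a (rw r) (cl r)" by (simp add: lgen_rep[OF sa] mult.commute)
  also have "\<dots> = vecof (L a) $ r" using r by (simp add: vecof_def)
  finally show "(Mm *\<^sub>v vecof a) $ r = vecof (L a) $ r" .
qed (simp add: Mm_def vecof_def)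

lemma eig_Mm: assumes "eigenvalue Mm lam" shows "Re lam < 0"
proof -
  from assms obtain x where x: "x \<in> carrier_vec (N*N)" "x \<noteq> 0\<^sub>v (N*N)" "Mm *\<^sub>v x = lam \<cdot>\<^sub>v x"
    unfolding eigenvalue_def eigenvector_def by (auto simp: Mm_def)
  define a where "a = unvec x"
  have sa: "supported N a" by (simp add: a_def unvec_supported)
  have sla: "supported N (\<lambda>i j. lam * a i j)" using sa by (auto simp: supported_def)
  have sm: "vecof (\<lambda>i j. lam * a i j) = lam \<cdot>\<^sub>v vecof a" by (intro eq_vecI) (auto simp: vecof_def)
  have "vecof (L a) = vecof (\<lambda>i j. lam * a i j)"
    unfolding sm Mm_vecof[OF sa, symmetric] using x vecof_unvec[OF x(1)] by (simp add: a_def)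
  then have La: "L a = (\<lambda>i j. lam * a i j)" using vecof_inj[OF lgen_supported[OF sa] sla] by blast
  obtain r where r: "r < N*N" "x $ r \<noteq> 0" using x by (metis carrier_vecD eq_vecI index_zero_vec(1) index_zero_vec(2))
  have "a (rw r) (cl r) \<noteq> 0" using r rw_cl_range[OF r(1)] by (simp add: a_def unvec_def ix_rw_cl)
  then show ?thesis using eigen_neg[OF sa _ , of lam] La by auto
qed

lemma delta_exists: "\<exists>\<delta>>0. \<forall>lam. eigenvalue Mm lam \<longrightarrow> cmod (1 + of_real \<delta> * lam) < 1"
proof -
  define S where "S = spectrum Mm"
  have finS: "finite S" unfolding S_def by (rule card_finite_spectrum[OF Mm_carrier])
  have neg: "Re l < 0" if "l \<in> S" for l using that eig_Mm by (simp add: S_def spectrum_def)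
  define f where "f l = - Re l / (cmod l)^2" for l
  define \<delta> where "\<delta> = Min (insert 1 (f ` S))"
  have fpos: "f l > 0" if "l \<in> S" for l
  proof -
    have "l \<noteq> 0" using neg[OF that] by auto
    then have "(cmod l)^2 > 0" by simp
    then have "Re l / (cmod l)^2 < 0" using neg[OF that] by (simp add: divide_neg_pos)
    then show ?thesis by (simp add: f_def)
  qed
  have dpos: "\<delta> > 0" unfolding \<delta>_def using finS fpos by (subst Min_gr_iff) auto
  have dle: "\<delta> \<le> f l" if "l \<in> S" for l unfolding \<delta>_def using finS that by (intro Min_le) auto
  show ?thesis
  proof (intro exI[of _ \<delta>] conjI allI impI dpos)
    fix l assume "eigenvalue Mm l"
    then have l: "l \<in> S" by (simp add: S_def spectrum_def)
    have nl: "(cmod l)^2 > 0" using neg[OF l] by auto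
    have "\<delta> * (cmod l)^2 \<le> (- (Re l / (cmod l)^2)) * (cmod l)^2"
      using dle[OF l] nl by (intro mult_right_mono) (auto simp: f_def)
    also have "\<dots> = - Re l" using nl by simp
    finally have "\<delta> * (cmod l)^2 \<le> - Re l" .
    then have "\<delta> * (\<delta> * (cmod l)^2) \<le> \<delta> * (- Re l)" using dpos by (intro mult_left_mono) auto
    moreover have "(cmod (1 + of_real \<delta> * l))^2 = 1 + 2 * \<delta> * Re l + \<delta> * (\<delta> * (cmod l)^2)"
    proof -
      have "(cmod (1 + of_real \<delta> * l))^2 = (Re (1 + of_real \<delta> * l))^2 + (Im (1 + of_real \<delta> * l))^2" by (rule cmod_power2)
      also have "\<dots> = (1 + \<delta> * Re l)^2 + (\<delta> * Im l)^2" by simp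
      finally have e1: "(cmod (1 + of_real \<delta> * l))^2 = (1 + \<delta> * Re l)^2 + (\<delta> * Im l)^2" .
      have e2: "(cmod l)^2 = (Re l)^2 + (Im l)^2" by (rule cmod_power2)
      show ?thesis unfolding e1 e2 by (simp add: power2_eq_square algebra_simps)
    qed
    moreover have "\<delta> * Re l < 0" using dpos neg[OF l] by (rule mult_pos_neg)
    ultimately have "(cmod (1 + of_real \<delta> * l))^2 < 1" by (simp add: algebra_simps)
    then show "cmod (1 + of_real \<delta> * l) < 1"
      using power_less_imp_less_base[of "cmod (1 + of_real \<delta> * l)" 2 1] by simp
  qed
qed

definition \<delta>0 where "\<delta>0 = (SOME \<delta>. \<delta> > 0 \<and> (\<forall>lam. eigenvalue Mm lam \<longrightarrow> cmod (1 + of_real \<delta> * lam) < 1))"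

lemma \<delta>0: "\<delta>0 > 0" "eigenvalue Mm lam \<Longrightarrow> cmod (1 + of_real \<delta>0 * lam) < 1"
  using someI_ex[OF delta_exists] unfolding \<delta>0_def by blast+

definition Bm where "Bm = 1\<^sub>m (N*N) + of_real \<delta>0 \<cdot>\<^sub>m Mm"
definition Bop where "Bop a = (\<lambda>x y. a x y + of_real \<delta>0 * L a x y)"

lemma Bm_carrier[simp]: "Bm \<in> carrier_mat (N*N) (N*N)" by (simp add: Bm_def)
lemma Bm_dim[simp]: "dim_row Bm = N*N" "dim_col Bm = N*N" by (simp_all add: Bm_def)

lemma Bm_mv: "w \<in> carrier_vec (N*N) \<Longrightarrow> r < N*N \<Longrightarrow> (Bm *\<^sub>v w) $ r = w $ r + of_real \<delta>0 * (Mm *\<^sub>v w) $ r"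
proof -
  assume w: "w \<in> carrier_vec (N*N)" and r: "r < N*N"
  have "(Bm *\<^sub>v w) $ r = (\<Sum>j<N*N. Bm $$ (r,j) * w $ j)" using w r by (intro mv_entry) auto
  also have "\<dots> = (\<Sum>j<N*N. (if r = j then w $ j else 0) + of_real \<delta>0 * (Mm $$ (r,j) * w $ j))"
    using r by (intro sum.cong refl) (auto simp: Bm_def algebra_simps)
  also have "\<dots> = w $ r + of_real \<delta>0 * (\<Sum>j<N*N. Mm $$ (r,j) * w $ j)"
    using r by (simp add: sum.distrib sum_distrib_left)
  also have "\<dots> = w $ r + of_real \<delta>0 * (Mm *\<^sub>v w) $ r" using w r mv_entry[OF Mm_carrier w r] by simp
  finally show ?thesis .
qed

lemma Bm_vecof: "supported N a \<Longrightarrow> Bm *\<^sub>v vecof a = vecof (Bop a)"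
proof (intro eq_vecI)
  assume sa: "supported N a"
  fix r assume "r < dim_vec (vecof (Bop a))"
  then have r: "r < N*N" by (simp add: vecof_def)
  have "(Bm *\<^sub>v vecof a) $ r = vecof a $ r + of_real \<delta>0 * (Mm *\<^sub>v vecof a) $ r" using Bm_mv[OF _ r] by simp
  also have "\<dots> = vecof (Bop a) $ r" unfolding Mm_vecof[OF sa] using r by (simp add: vecof_def Bop_def)
  finally show "(Bm *\<^sub>v vecof a) $ r = vecof (Bop a) $ r" .
qed (simp add: Bm_def vecof_def)

lemma Bop_supported: "supported N a \<Longrightarrow> supported N (Bop a)"
  using lgen_supported by (auto simp: Bop_def supported_def)

lemma eig_Bm: assumes "eigenvalue Bm mu" shows "cmod mu < 1"
proof -
  from assms obtain x where "eigenvector Bm x mu" unfolding eigenvalue_def by auto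
  then have x: "x \<in> carrier_vec (N*N)" "x \<noteq> 0\<^sub>v (N*N)" "Bm *\<^sub>v x = mu \<cdot>\<^sub>v x"
    unfolding eigenvector_def using Bm_carrier by auto
  have "Mm *\<^sub>v x = ((mu - 1) / of_real \<delta>0) \<cdot>\<^sub>v x"
  proof (intro eq_vecI)
    fix r assume "r < dim_vec (((mu - 1) / of_real \<delta>0) \<cdot>\<^sub>v x)"
    then have r: "r < N*N" using x by simp
    have "x $ r + of_real \<delta>0 * (Mm *\<^sub>v x) $ r = mu * x $ r"
      using Bm_mv[OF x(1) r] x(3) r x(1) by (metis carrier_vecD index_smult_vec(1))
    then show "(Mm *\<^sub>v x) $ r = (((mu - 1) / of_real \<delta>0) \<cdot>\<^sub>v x) $ r"
      using \<delta>0(1) r x(1) by (simp add: field_simps)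
  qed (use x(1) in simp)
  then have "eigenvalue Mm ((mu - 1) / of_real \<delta>0)"
    unfolding eigenvalue_def eigenvector_def using x by (auto simp: Mm_def)
  from \<delta>0(2)[OF this] show ?thesis using \<delta>0(1) by simp
qed

lemma smult_mv: "A \<in> carrier_mat n n \<Longrightarrow> w \<in> carrier_vec n \<Longrightarrow> r < n \<Longrightarrow>
   ((c \<cdot>\<^sub>m A) *\<^sub>v w) $ r = c * (A *\<^sub>v w) $ r"
proof -
  assume A: "A \<in> carrier_mat n n" and w: "w \<in> carrier_vec n" and r: "r < n"
  have "((c \<cdot>\<^sub>m A) *\<^sub>v w) $ r = (\<Sum>j<n. (c \<cdot>\<^sub>m A) $$ (r,j) * w $ j)" using A w r by (intro mv_entry) auto
  also have "\<dots> = c * (\<Sum>j<n. A $$ (r,j) * w $ j)" unfolding sum_distrib_left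
    using A r by (intro sum.cong refl) (auto simp: mult.assoc)
  also have "\<dots> = c * (A *\<^sub>v w) $ r" using mv_entry[OF A w r] by simp
  finally show ?thesis .
qed

lemma Bm_pow_bound: "\<exists>c \<rho>. 0 < \<rho> \<and> \<rho> < 1 \<and> c \<ge> 0 \<and> (\<forall>k i j. i < N*N \<longrightarrow> j < N*N \<longrightarrow> cmod ((Bm ^\<^sub>m k) $$ (i,j)) \<le> c * \<rho>^k)"
proof -
  define SB where "SB = spectrum Bm"
  have finSB: "finite SB" unfolding SB_def by (rule card_finite_spectrum[OF Bm_carrier])
  define m0 where "m0 = Max (insert 0 (cmod ` SB))"
  have m0lt: "m0 < 1" unfolding m0_def using finSB eig_Bm by (subst Max_less_iff) (auto simp: SB_def spectrum_def)
  have m0ge: "m0 \<ge> 0" unfolding m0_def using finSB by (intro Max_ge) auto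
  have m0le: "cmod mu \<le> m0" if "eigenvalue Bm mu" for mu
    unfolding m0_def using finSB that by (intro Max_ge) (auto simp: SB_def spectrum_def)
  define \<rho> where "\<rho> = (1 + m0) / 2"
  have rho: "0 < \<rho>" "\<rho> < 1" "m0 < \<rho>" using m0lt m0ge by (auto simp: \<rho>_def)
  define Cm where "Cm = complex_of_real (1 / \<rho>) \<cdot>\<^sub>m Bm"
  have Cm_carrier: "Cm \<in> carrier_mat (N*N) (N*N)" by (simp add: Cm_def)
  have eigC: "cmod nu < 1" if "eigenvalue Cm nu" for nu
  proof -
    from that obtain x where "eigenvector Cm x nu" unfolding eigenvalue_def by auto
    then have x: "x \<in> carrier_vec (N*N)" "x \<noteq> 0\<^sub>v (N*N)" "Cm *\<^sub>v x = nu \<cdot>\<^sub>v x"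
      unfolding eigenvector_def using Cm_carrier by auto
    have "Bm *\<^sub>v x = (of_real \<rho> * nu) \<cdot>\<^sub>v x"
    proof (intro eq_vecI)
      fix r assume "r < dim_vec ((of_real \<rho> * nu) \<cdot>\<^sub>v x)"
      then have r: "r < N*N" using x by simp
      have "(Cm *\<^sub>v x) $ r = nu * x $ r" using x(3) r x(1) by (metis carrier_vecD index_smult_vec(1))
      then have "of_real (1/\<rho>) * (Bm *\<^sub>v x) $ r = nu * x $ r"
        using smult_mv[OF Bm_carrier x(1) r] by (simp add: Cm_def)
      then show "(Bm *\<^sub>v x) $ r = ((of_real \<rho> * nu) \<cdot>\<^sub>v x) $ r"
        using rho r x(1) by (simp add: field_simps)
    qed (use x(1) in simp)
    then have "eigenvalue Bm (of_real \<rho> * nu)"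
      unfolding eigenvalue_def eigenvector_def using x by auto
    from m0le[OF this] have "\<rho> * cmod nu \<le> m0" using rho by (simp add: norm_mult)
    then have "\<rho> * cmod nu < \<rho> * 1" using rho by linarith
    then show ?thesis using rho by (simp only: mult_less_cancel_left_pos)
  qed
  have n0: "N * N > 0" using N2 by simp
  have "spectral_radius Cm < 1"
    unfolding spectral_radius_def
    using card_finite_spectrum(1)[OF Cm_carrier] spectrum_non_empty[OF Cm_carrier n0] eigC
    by (subst Max_less_iff) (auto simp: spectrum_def)
  from spectral_radius_jnf_norm_bound_less_1_upper_triangular[OF Cm_carrier this]
  obtain c where c: "\<And>k. norm_bound (Cm ^\<^sub>m k) c" by auto
  have bound: "cmod ((Bm ^\<^sub>m k) $$ (i,j)) \<le> c * \<rho>^k" if "i < N*N" "j < N*N" for k i j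
  proof -
    have "(Cm ^\<^sub>m k) = complex_of_real (1/\<rho>) ^ k \<cdot>\<^sub>m (Bm ^\<^sub>m k)"
      unfolding Cm_def by (rule pow_smult[OF Bm_carrier])
    then have "(Cm ^\<^sub>m k) $$ (i,j) = complex_of_real (1/\<rho>) ^ k * (Bm ^\<^sub>m k) $$ (i,j)"
      using that by simp
    moreover have "cmod ((Cm ^\<^sub>m k) $$ (i,j)) \<le> c" using c[of k] that unfolding norm_bound_def
      using Cm_carrier by auto
    ultimately have "(1/\<rho>)^k * cmod ((Bm ^\<^sub>m k) $$ (i,j)) \<le> c" using rho by (simp add: norm_mult norm_power norm_divide)
    then show ?thesis using rho by (simp add: field_simps)
  qed
  have "cmod ((Bm ^\<^sub>m 0) $$ (0,0)) \<le> c * \<rho>^0" using bound[of 0 0 0] n0 by blast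
  then have "c \<ge> 0" using n0 by simp
  then show ?thesis using bound rho by blast
qed

end



lemma finite_diff_binom:
  fixes g :: "nat \<Rightarrow> 'a :: comm_ring_1"
  shows "(\<Sum>i\<le>Suc k. of_nat (Suc k choose i) * (-1)^(Suc k - i) * g i)
       = (\<Sum>i\<le>k. of_nat (k choose i) * (-1)^(k - i) * (g (Suc i) - g i))"
proof -
  have A: "(\<Sum>i\<le>Suc k. of_nat (Suc k choose i) * (-1)^(Suc k - i) * g i)
     = (-1)^(Suc k) * g 0 + (\<Sum>i\<le>k. of_nat (k choose i) * (-1)^(k - i) * g (Suc i))
       + (\<Sum>i\<le>k. of_nat (k choose Suc i) * (-1)^(k - i) * g (Suc i))"
    unfolding sum.atMost_Suc_shift by (simp add: distrib_right sum.distrib del: sum.atMost_Suc)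
  have B: "(\<Sum>i\<le>Suc k. of_nat (k choose i) * (-1)^(Suc k - i) * g i)
     = (-1)^(Suc k) * g 0 + (\<Sum>i\<le>k. of_nat (k choose Suc i) * (-1)^(k - i) * g (Suc i))"
    unfolding sum.atMost_Suc_shift by (simp del: sum.atMost_Suc)
  have C: "(\<Sum>i\<le>Suc k. of_nat (k choose i) * (-1)^(Suc k - i) * g i)
     = (\<Sum>i\<le>k. of_nat (k choose i) * (-1)^(Suc k - i) * g i)"
    by (simp add: sum.atMost_Suc binomial_eq_0)
  have D: "(\<Sum>i\<le>k. of_nat (k choose i) * (-1)^(Suc k - i) * g i) = - (\<Sum>i\<le>k. of_nat (k choose i) * (-1)^(k - i) * g i)"
    by (simp add: sum_negf[symmetric] Suc_diff_le)
  show ?thesis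
    using A B C D by (simp add: right_diff_distrib sum_subtractf algebra_simps)
qed

context setting begin

definition nm :: "cmat \<Rightarrow> real" where "nm F = (\<Sum>p\<in>{1..N}. \<Sum>q\<in>{1..N}. cmod (F p q))"
definition \<kappa> :: real where "\<kappa> = (\<Sum>x\<in>{1..N}. \<Sum>y\<in>{1..N}. \<Sum>p\<in>{1..N}. \<Sum>q\<in>{1..N}. cmod (K x y p q))"

lemma nm_nonneg: "nm F \<ge> 0" by (simp add: nm_def sum_nonneg)
lemma kappa_nonneg: "\<kappa> \<ge> 0" by (simp add: \<kappa>_def sum_nonneg)

lemma entry_le_nm: assumes "supported N F" shows "cmod (F x y) \<le> nm F"
proof (cases "x \<in> {1..N} \<and> y \<in> {1..N}")
  case True
  have "cmod (F x y) \<le> (\<Sum>q\<in>{1..N}. cmod (F x q))" using True by (intro member_le_sum) auto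
  also have "\<dots> \<le> nm F" unfolding nm_def using True
    by (intro member_le_sum[where f = "\<lambda>p. \<Sum>q\<in>{1..N}. cmod (F p q)"] sum_nonneg) auto
  finally show ?thesis .
next
  case False then show ?thesis using assms nm_nonneg by (auto simp: supported_def)
qed

lemma nm_L: assumes "supported N F" shows "nm (L F) \<le> \<kappa> * nm F"
proof -
  have "cmod (L F x y) \<le> (\<Sum>p\<in>{1..N}. \<Sum>q\<in>{1..N}. cmod (K x y p q)) * nm F" for x y
  proof -
    have "cmod (L F x y) \<le> (\<Sum>p\<in>{1..N}. \<Sum>q\<in>{1..N}. cmod (F p q * K x y p q))"
      unfolding lgen_rep[OF assms] by (rule order_trans[OF norm_sum sum_mono[OF norm_sum]])
    also have "\<dots> \<le> (\<Sum>p\<in>{1..N}. \<Sum>q\<in>{1..N}. nm F * cmod (K x y p q))"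
      by (intro sum_mono) (auto simp: norm_mult intro!: mult_right_mono entry_le_nm[OF assms])
    finally show ?thesis by (simp add: sum_distrib_left sum_distrib_right mult.commute)
  qed
  then have "nm (L F) \<le> (\<Sum>x\<in>{1..N}. \<Sum>y\<in>{1..N}. (\<Sum>p\<in>{1..N}. \<Sum>q\<in>{1..N}. cmod (K x y p q)) * nm F)"
    unfolding nm_def by (intro sum_mono) auto
  also have "\<dots> = \<kappa> * nm F" by (simp add: \<kappa>_def sum_distrib_right)
  finally show ?thesis .
qed

lemma Lk_supported: "supported N a \<Longrightarrow> supported N ((L ^^ k) a)"
  by (induction k) (auto simp: lgen_supported)

lemma Lk_nm: "supported N a \<Longrightarrow> nm ((L ^^ k) a) \<le> \<kappa> ^ k * nm a"
proof (induction k)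
  case 0 then show ?case by simp
next
  case (Suc k)
  have "nm ((L ^^ Suc k) a) \<le> \<kappa> * nm ((L ^^ k) a)" using nm_L[OF Lk_supported[OF Suc.prems]] by simp
  also have "\<dots> \<le> \<kappa> * (\<kappa> ^ k * nm a)" using Suc kappa_nonneg by (intro mult_left_mono) auto
  finally show ?case by (simp add: mult.assoc)
qed

lemma Lk_bound: "supported N a \<Longrightarrow> cmod ((L ^^ k) a x y) \<le> \<kappa> ^ k * nm a"
  using entry_le_nm[OF Lk_supported] Lk_nm order_trans by blast

lemma Tsg_summable: assumes "supported N a"
  shows "summable (\<lambda>k. cmod (complex_of_real (t ^ k / fact k) * (L ^^ k) a x y))"
proof (rule summable_comparison_test'[where N = 0])
  show "summable (\<lambda>k. nm a * ((\<bar>t\<bar> * \<kappa>) ^ k / fact k))"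
  proof -
    have "summable (\<lambda>k. (\<bar>t\<bar> * \<kappa>) ^ k / fact k)"
      using summable_exp[of "\<bar>t\<bar> * \<kappa>"] by (simp add: divide_inverse mult.commute)
    then show ?thesis by (rule summable_mult)
  qed
next
  fix k :: nat
  have "cmod (complex_of_real (t ^ k / fact k) * (L ^^ k) a x y) = (\<bar>t\<bar> ^ k / fact k) * cmod ((L ^^ k) a x y)"
    by (simp add: norm_mult norm_divide norm_power)
  also have "\<dots> \<le> (\<bar>t\<bar> ^ k / fact k) * (\<kappa> ^ k * nm a)"
    by (intro mult_left_mono Lk_bound[OF assms]) auto
  also have "\<dots> = nm a * ((\<bar>t\<bar> * \<kappa>) ^ k / fact k)" by (simp add: power_mult_distrib)
  finally show "norm (cmod (complex_of_real (t ^ k / fact k) * (L ^^ k) a x y)) \<le> nm a * ((\<bar>t\<bar> * \<kappa>) ^ k / fact k)"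
    by simp
qed

lemma lgen_lincomb: "L (\<lambda>x y. \<Sum>i\<in>I. c i * F i x y) = (\<lambda>x y. \<Sum>i\<in>I. c i * L (F i) x y)"
  by (simp add: lgen_sum lgen_smult)

lemma Bop_pow_supported: "supported N a \<Longrightarrow> supported N ((Bop ^^ k) a)"
  by (induction k) (auto simp: Bop_supported)

lemma binom_op:
  assumes sa: "supported N a"
  shows "(\<lambda>x y. \<Sum>i\<le>k. of_nat (k choose i) * (-1)^(k - i) * (Bop ^^ i) a x y) = (\<lambda>x y. of_real \<delta>0 ^ k * (L ^^ k) a x y)"
proof (induction k)
  case 0 then show ?case by simp
next
  case (Suc k)
  have "(\<Sum>i\<le>Suc k. of_nat (Suc k choose i) * (-1)^(Suc k - i) * (Bop ^^ i) a x y)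
      = of_real \<delta>0 ^ Suc k * (L ^^ Suc k) a x y" for x y
  proof -
    have "(\<Sum>i\<le>Suc k. of_nat (Suc k choose i) * (-1)^(Suc k - i) * (Bop ^^ i) a x y)
        = (\<Sum>i\<le>k. of_nat (k choose i) * (-1)^(k - i) * ((Bop ^^ Suc i) a x y - (Bop ^^ i) a x y))"
      by (rule finite_diff_binom)
    also have "\<dots> = (\<Sum>i\<le>k. of_nat (k choose i) * (-1)^(k - i) * (of_real \<delta>0 * L ((Bop ^^ i) a) x y))"
      by (simp add: Bop_def)
    also have "\<dots> = of_real \<delta>0 * (\<Sum>i\<le>k. of_nat (k choose i) * (-1)^(k - i) * L ((Bop ^^ i) a) x y)"
      by (simp add: sum_distrib_left mult_ac)
    also have "(\<Sum>i\<le>k. of_nat (k choose i) * (-1)^(k - i) * L ((Bop ^^ i) a) x y)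
        = L (\<lambda>x y. \<Sum>i\<le>k. of_nat (k choose i) * (-1)^(k - i) * (Bop ^^ i) a x y) x y"
      by (simp add: lgen_lincomb)
    also have "\<dots> = L (\<lambda>x y. of_real \<delta>0 ^ k * (L ^^ k) a x y) x y" by (simp only: Suc.IH)
    also have "\<dots> = of_real \<delta>0 ^ k * (L ^^ Suc k) a x y" by (simp add: lgen_smult)
    finally show ?thesis by (simp add: mult.assoc)
  qed
  then show ?case by auto
qed

lemma vecof_Bop_pow: "supported N a \<Longrightarrow> vecof ((Bop ^^ k) a) = (Bm ^\<^sub>m k) *\<^sub>v vecof a"
proof (induction k arbitrary: a)
  case 0 then show ?case by simp
next
  case (Suc k)
  have "vecof ((Bop ^^ Suc k) a) = vecof ((Bop ^^ k) (Bop a))" by (simp add: funpow_Suc_right del: funpow.simps)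
  also have "\<dots> = (Bm ^\<^sub>m k) *\<^sub>v vecof (Bop a)" using Suc.IH[OF Bop_supported[OF Suc.prems]] .
  also have "\<dots> = (Bm ^\<^sub>m k) *\<^sub>v (Bm *\<^sub>v vecof a)" by (simp add: Bm_vecof[OF Suc.prems])
  also have "\<dots> = (Bm ^\<^sub>m Suc k) *\<^sub>v vecof a"
    by (simp add: assoc_mult_mat_vec[of _ "N*N" "N*N" _ "N*N", symmetric])
  finally show ?case .
qed

definition cB :: real where "cB = (SOME c. \<exists>\<rho>. 0 < \<rho> \<and> \<rho> < 1 \<and> c \<ge> 0 \<and> (\<forall>k i j. i < N*N \<longrightarrow> j < N*N \<longrightarrow> cmod ((Bm ^\<^sub>m k) $$ (i,j)) \<le> c * \<rho>^k))"
definition \<rho>B :: real where "\<rho>B = (SOME \<rho>. 0 < \<rho> \<and> \<rho> < 1 \<and> cB \<ge> 0 \<and> (\<forall>k i j. i < N*N \<longrightarrow> j < N*N \<longrightarrow> cmod ((Bm ^\<^sub>m k) $$ (i,j)) \<le> cB * \<rho>^k))"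

lemma cB_rhoB: "0 < \<rho>B" "\<rho>B < 1" "cB \<ge> 0" "i < N*N \<Longrightarrow> j < N*N \<Longrightarrow> cmod ((Bm ^\<^sub>m k) $$ (i,j)) \<le> cB * \<rho>B^k"
proof -
  have "\<exists>\<rho>. 0 < \<rho> \<and> \<rho> < 1 \<and> cB \<ge> 0 \<and> (\<forall>k i j. i < N*N \<longrightarrow> j < N*N \<longrightarrow> cmod ((Bm ^\<^sub>m k) $$ (i,j)) \<le> cB * \<rho>^k)"
    unfolding cB_def by (rule someI_ex) (rule Bm_pow_bound)
  from someI_ex[OF this, folded \<rho>B_def]
  show "0 < \<rho>B" "\<rho>B < 1" "cB \<ge> 0" "i < N*N \<Longrightarrow> j < N*N \<Longrightarrow> cmod ((Bm ^\<^sub>m k) $$ (i,j)) \<le> cB * \<rho>B^k"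
    by auto
qed

lemma Bop_bound: assumes sa: "supported N a" shows "cmod ((Bop ^^ k) a x y) \<le> cB * \<rho>B ^ k * nm a"
proof (cases "x \<in> {1..N} \<and> y \<in> {1..N}")
  case True
  define r where "r = ix x y"
  have r: "r < N*N" using True by (simp add: r_def ix_range)
  have "(Bop ^^ k) a x y = vecof ((Bop ^^ k) a) $ r" using r rw_ix[of x y] True by (simp add: vecof_def r_def)
  also have "\<dots> = (\<Sum>j<N*N. (Bm ^\<^sub>m k) $$ (r,j) * vecof a $ j)"
    unfolding vecof_Bop_pow[OF sa] by (rule mv_entry) (use r in auto)
  finally have e: "(Bop ^^ k) a x y = (\<Sum>j<N*N. (Bm ^\<^sub>m k) $$ (r,j) * vecof a $ j)" .
  have "cmod ((Bop ^^ k) a x y) \<le> (\<Sum>j<N*N. cmod ((Bm ^\<^sub>m k) $$ (r,j)) * cmod (vecof a $ j))"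
    unfolding e by (rule order_trans[OF norm_sum]) (simp add: norm_mult)
  also have "\<dots> \<le> (\<Sum>j<N*N. cB * \<rho>B ^ k * cmod (vecof a $ j))"
    using r cB_rhoB(4) by (intro sum_mono mult_right_mono) auto
  also have "\<dots> = cB * \<rho>B ^ k * (\<Sum>j<N*N. cmod (a (rw j) (cl j)))"
    by (simp add: sum_distrib_left vecof_def)
  also have "\<dots> = cB * \<rho>B ^ k * nm a" using reindex[of "\<lambda>p q. cmod (a p q)"] by (simp add: nm_def)
  finally show ?thesis .
next
  case False
  then have "(Bop ^^ k) a x y = 0" using Bop_pow_supported[OF sa, of k] by (auto simp: supported_def)
  then show ?thesis using cB_rhoB nm_nonneg by simp
qed

abbreviation TT where "TT \<equiv> Tsg N v zl zr \<beta>"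

lemma exp_real_sums: "(\<lambda>n. (z::real) ^ n / fact n) sums exp z"
  using exp_converges[of z] by (simp add: divide_inverse mult.commute)

lemma exp_cplx_sums: "(\<lambda>n. complex_of_real (z ^ n / fact n)) sums exp (complex_of_real z)"
  using exp_converges[of "complex_of_real z"] by (simp add: scaleR_conv_of_real divide_inverse mult.commute)

end



lemma aux_alg:
  fixes X :: complex and a b f1 f2 fk :: real
  assumes "f1 > 0" "f2 > 0" "fk > 0"
  shows "complex_of_real (a / f1) * X * complex_of_real ((-1) ^ m * b / f2)
       = complex_of_real (a * b / fk) * (complex_of_real (fk / (f1 * f2)) * (-1) ^ m * X)"
  using assms by (simp add: field_simps)

lemma improper_FTC:
  fixes f g :: "real \<Rightarrow> complex"
  assumes der: "\<And>t. t \<ge> 0 \<Longrightarrow> (f has_vector_derivative g t) (at t)"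
    and gb: "\<And>t. t \<ge> 0 \<Longrightarrow> cmod (g t) \<le> C * exp (- c * t)"
    and c: "c > 0"
    and flim: "(f \<longlongrightarrow> 0) at_top"
  shows "(g has_integral (- f 0)) {0..}"
proof -
  define h where "h t = C * exp (- c * t)" for t
  have hint: "h integrable_on {0..}"
    unfolding h_def using integrable_cmul[OF integrable_on_exp_minus_to_infinity[OF c, of 0], of C] by simp
  define hk where "hk k t = (if t \<in> {0..real k} then g t else 0)" for k :: nat and t
  have ftc: "(g has_integral (f (real k) - f 0)) {0..real k}" for k
    by (rule fundamental_theorem_of_calculus) (auto intro: has_vector_derivative_at_within der)
  have hk_int: "(hk k has_integral (f (real k) - f 0)) {0..}" for k
    unfolding hk_def using has_integral_restrict[of "{0..real k}" "{0..}" g] ftc by auto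
  have dc: "g integrable_on {0..} \<and> (\<lambda>k. integral {0..} (hk k)) \<longlonglongrightarrow> integral {0..} g"
  proof (intro conjI)
    have a1: "\<And>k. hk k integrable_on {0..}" using hk_int by blast
    have "cmod (g 0) \<le> C" using gb[of 0] by simp
    then have C0: "C \<ge> 0" using norm_ge_zero[of "g 0"] by linarith
    have a2: "\<And>k x. x \<in> {0..} \<Longrightarrow> norm (hk k x) \<le> h x" using gb C0
      by (auto simp: hk_def h_def)
    have a3: "\<And>x. x \<in> {0..} \<Longrightarrow> (\<lambda>k. hk k x) \<longlonglongrightarrow> g x"
    proof -
      fix x :: real assume "x \<in> {0..}"
      then have x0: "x \<ge> 0" by simp
      have "eventually (\<lambda>k. hk k x = g x) sequentially"
      proof (rule eventually_sequentiallyI[of "nat \<lceil>x\<rceil>"])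
        fix k assume "nat \<lceil>x\<rceil> \<le> k"
        then have "x \<le> real k" using real_nat_ceiling_ge[of x] by (meson of_nat_le_iff order_trans)
        then show "hk k x = g x" using x0 by (simp add: hk_def)
      qed
      then show "(\<lambda>k. hk k x) \<longlonglongrightarrow> g x" by (rule tendsto_eventually)
    qed
    show "g integrable_on {0..}" by (rule dominated_convergence(1)[OF a1 hint a2 a3])
    show "(\<lambda>k. integral {0..} (hk k)) \<longlonglongrightarrow> integral {0..} g" by (rule dominated_convergence(2)[OF a1 hint a2 a3])
  qed
  have lim2: "(\<lambda>k. integral {0..} (hk k)) \<longlonglongrightarrow> 0 - f 0"
  proof -
    have "(\<lambda>k. f (real k)) \<longlonglongrightarrow> 0" using filterlim_compose[OF flim filterlim_real_sequentially] by simp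
    then have "(\<lambda>k. f (real k) - f 0) \<longlonglongrightarrow> 0 - f 0" by (intro tendsto_diff) auto
    moreover have "integral {0..} (hk k) = f (real k) - f 0" for k using hk_int[of k] by (rule integral_unique)
    ultimately show ?thesis by simp
  qed
  have "integral {0..} g = - f 0" using LIMSEQ_unique[OF conjunct2[OF dc] lim2] by simp
  then show ?thesis using conjunct1[OF dc] by (metis integrable_integral)
qed

lemma exp_decay: "(c::real) > 0 \<Longrightarrow> ((\<lambda>t. C * exp (- c * t)) \<longlongrightarrow> 0) at_top"
proof -
  assume c: "c > 0"
  have "filterlim (\<lambda>t. c * t) at_top at_top"
    by (rule filterlim_tendsto_pos_mult_at_top[OF tendsto_const c filterlim_ident])
  then have "filterlim (\<lambda>t. - (c * t)) at_bot at_top" by (simp add: filterlim_uminus_at_top)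
  then have "((\<lambda>t. exp (- (c * t))) \<longlongrightarrow> 0) at_top" by (rule filterlim_compose[OF exp_at_bot])
  then show ?thesis by (intro tendsto_mult_right_zero) simp
qed

lemma decay_integrable:
  fixes f :: "real \<Rightarrow> complex"
  assumes cont: "continuous_on {0..} f" and fb: "\<And>t. t \<ge> 0 \<Longrightarrow> cmod (f t) \<le> C * exp (- c * t)" and c: "c > 0"
  shows "f integrable_on {0..}"
proof (rule measurable_bounded_by_integrable_imp_integrable)
  show "f \<in> borel_measurable (lebesgue_on {0..})"
    by (rule continuous_imp_measurable_on_sets_lebesgue[OF cont]) simp
  show "(\<lambda>t. C * exp (- c * t)) integrable_on {0..}"
    using integrable_cmul[OF integrable_on_exp_minus_to_infinity[OF c, of 0], of C] by simp
qed (use fb in auto)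

context setting begin
lemma Tsg_repr:
  assumes sa: "supported N a" and s: "s \<ge> 0" and t: "t = \<delta>0 * s"
  shows "TT t a x y = (\<Sum>j. complex_of_real (s ^ j / fact j) * (Bop ^^ j) a x y) * exp (complex_of_real (- s))"
    and "cmod (\<Sum>j. complex_of_real (s ^ j / fact j) * (Bop ^^ j) a x y) \<le> cB * nm a * exp (s * \<rho>B)"
proof -
  define A where "A j = complex_of_real (s ^ j / fact j) * (Bop ^^ j) a x y" for j
  define B where "B j = complex_of_real ((- s) ^ j / fact j)" for j
  define G where "G j = cB * nm a * ((s * \<rho>B) ^ j / fact j)" for j
  have AG: "cmod (A j) \<le> G j" for j
  proof -
    have "cmod (A j) = (s ^ j / fact j) * cmod ((Bop ^^ j) a x y)" using s by (simp add: A_def norm_mult norm_divide norm_power)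
    also have "\<dots> \<le> (s ^ j / fact j) * (cB * \<rho>B ^ j * nm a)" using s by (intro mult_left_mono Bop_bound[OF sa]) auto
    also have "\<dots> = G j" by (simp add: G_def power_mult_distrib)
    finally show ?thesis .
  qed
  have Gsums: "G sums (cB * nm a * exp (s * \<rho>B))" unfolding G_def by (intro sums_mult exp_real_sums)
  have sumA: "summable (\<lambda>j. cmod (A j))"
    by (rule summable_comparison_test'[where N = 0, OF sums_summable[OF Gsums]]) (use AG in simp)
  have sumB: "summable (\<lambda>j. cmod (B j))"
  proof -
    have "summable (\<lambda>j. \<bar>s\<bar> ^ j / fact j)" using exp_real_sums[of "\<bar>s\<bar>"] by (rule sums_summable)
    moreover have "cmod (B j) = \<bar>s\<bar> ^ j / fact j" for j by (simp add: B_def norm_divide norm_power power_abs)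
    ultimately show ?thesis by simp
  qed
  have Bsum: "(\<Sum>j. B j) = exp (complex_of_real (- s))" unfolding B_def using exp_cplx_sums[of "-s"] by (rule sums_unique[symmetric])
  have cp: "(\<lambda>k. \<Sum>i\<le>k. A i * B (k - i)) sums ((\<Sum>k. A k) * (\<Sum>k. B k))"
    by (rule Cauchy_product_sums[OF sumA sumB])
  have trm: "(\<Sum>i\<le>k. A i * B (k - i)) = complex_of_real (t ^ k / fact k) * (L ^^ k) a x y" for k
  proof -
    have "A i * B (k - i) = complex_of_real (s ^ k / fact k) * (of_nat (k choose i) * (-1)^(k - i) * (Bop ^^ i) a x y)"
      if i: "i \<le> k" for i
    proof -
      have sk: "s ^ k = s ^ i * s ^ (k - i)" using i by (metis le_add_diff_inverse power_add)
      have pm: "(- s) ^ (k - i) = (-1) ^ (k - i) * s ^ (k - i)" by (rule power_minus)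
      have c: "(of_nat (k choose i) :: complex) = complex_of_real (fact k / (fact i * fact (k - i)))"
        using binomial_fact[OF i, where 'a=real] by (metis of_real_of_nat_eq)
      show ?thesis unfolding A_def B_def sk pm c
        by (rule aux_alg) auto
    qed
    then have "(\<Sum>i\<le>k. A i * B (k - i)) = complex_of_real (s ^ k / fact k) * (\<Sum>i\<le>k. of_nat (k choose i) * (-1)^(k - i) * (Bop ^^ i) a x y)"
      by (simp add: sum_distrib_left)
    also have "\<dots> = complex_of_real (s ^ k / fact k) * (of_real \<delta>0 ^ k * (L ^^ k) a x y)"
      using fun_cong[OF fun_cong[OF binom_op[OF sa, of k]], of x y] by simp
    also have "\<dots> = complex_of_real (t ^ k / fact k) * (L ^^ k) a x y"
      by (simp add: t power_mult_distrib)
    finally show ?thesis .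
  qed
  have "TT t a x y = (\<Sum>k. \<Sum>i\<le>k. A i * B (k - i))" by (simp only: Tsg_def trm)
  also have "\<dots> = (\<Sum>k. A k) * (\<Sum>k. B k)" using cp by (rule sums_unique[symmetric])
  finally show "TT t a x y = (\<Sum>j. complex_of_real (s ^ j / fact j) * (Bop ^^ j) a x y) * exp (complex_of_real (- s))"
    by (simp add: Bsum A_def)
  have "cmod (\<Sum>j. A j) \<le> (\<Sum>j. cmod (A j))" by (rule summable_norm[OF sumA])
  also have "\<dots> \<le> (\<Sum>j. G j)" by (rule suminf_le[OF AG sumA sums_summable[OF Gsums]])
  also have "\<dots> = cB * nm a * exp (s * \<rho>B)" using Gsums by (rule sums_unique[symmetric])
  finally show "cmod (\<Sum>j. complex_of_real (s ^ j / fact j) * (Bop ^^ j) a x y) \<le> cB * nm a * exp (s * \<rho>B)"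
    by (simp add: A_def)
qed


definition crate where "crate = (1 - \<rho>B) / \<delta>0"
lemma crate_pos: "crate > 0" using cB_rhoB \<delta>0 by (simp add: crate_def)

lemma Tsg_bound: assumes sa: "supported N a" and t: "t \<ge> 0"
  shows "cmod (TT t a x y) \<le> cB * nm a * exp (- crate * t)"
proof -
  define s where "s = t / \<delta>0"
  have s: "s \<ge> 0" "t = \<delta>0 * s" using t \<delta>0 by (auto simp: s_def)
  note R = Tsg_repr[OF sa s, of x y]
  have "cmod (TT t a x y) = cmod (\<Sum>j. complex_of_real (s ^ j / fact j) * (Bop ^^ j) a x y) * exp (- s)"
    unfolding R(1) by (simp add: norm_mult)
  also have "\<dots> \<le> cB * nm a * exp (s * \<rho>B) * exp (- s)" by (intro mult_right_mono R(2)) auto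
  also have "\<dots> = cB * nm a * exp (- crate * t)"
    using \<delta>0 by (simp add: crate_def s_def mult_exp_exp field_simps)
  finally show ?thesis .
qed

lemma Tsg_supported: "supported N a \<Longrightarrow> supported N (TT t a)"
  using Lk_supported by (auto simp: supported_def Tsg_def)

lemma Tsg_zero: "TT 0 a x y = a x y"
proof -
  have "(\<lambda>k. complex_of_real (0 ^ k / fact k) * (L ^^ k) a x y) sums a x y"
  proof -
    have "(\<lambda>k. complex_of_real (0 ^ k / fact k) * (L ^^ k) a x y) = (\<lambda>k. if k = 0 then a x y else 0)"
      by (auto simp: fun_eq_iff)
    then show ?thesis using sums_single[of 0 "\<lambda>_. a x y"] by simp
  qed
  then show ?thesis unfolding Tsg_def by (simp add: sums_iff)
qed

lemma Tsg_summable': "supported N a \<Longrightarrow> summable (\<lambda>k. complex_of_real (t ^ k / fact k) * (L ^^ k) a x y)"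
  by (rule summable_norm_cancel[OF Tsg_summable])

lemma Tsg_comm: assumes sa: "supported N a" shows "L (TT t a) x y = TT t (L a) x y"
proof -
  have "L (TT t a) x y = (\<Sum>p\<in>{1..N}. \<Sum>q\<in>{1..N}. TT t a p q * K x y p q)"
    by (rule lgen_rep[OF Tsg_supported[OF sa]])
  also have "\<dots> = (\<Sum>p\<in>{1..N}. \<Sum>q\<in>{1..N}. \<Sum>k. complex_of_real (t ^ k / fact k) * (L ^^ k) a p q * K x y p q)"
    unfolding Tsg_def by (intro sum.cong refl suminf_mult2 Tsg_summable'[OF sa])
  also have "\<dots> = (\<Sum>k. \<Sum>p\<in>{1..N}. \<Sum>q\<in>{1..N}. complex_of_real (t ^ k / fact k) * (L ^^ k) a p q * K x y p q)"
  proof -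
    have sm: "summable (\<lambda>k. complex_of_real (t ^ k / fact k) * (L ^^ k) a p q * K x y p q)" for p q
      by (intro summable_mult2 Tsg_summable'[OF sa])
    have "(\<Sum>q\<in>{1..N}. \<Sum>k. complex_of_real (t ^ k / fact k) * (L ^^ k) a p q * K x y p q)
        = (\<Sum>k. \<Sum>q\<in>{1..N}. complex_of_real (t ^ k / fact k) * (L ^^ k) a p q * K x y p q)" for p
      by (rule suminf_sum[symmetric]) (rule sm)
    then have "(\<Sum>p\<in>{1..N}. \<Sum>q\<in>{1..N}. \<Sum>k. complex_of_real (t ^ k / fact k) * (L ^^ k) a p q * K x y p q)
       = (\<Sum>p\<in>{1..N}. \<Sum>k. \<Sum>q\<in>{1..N}. complex_of_real (t ^ k / fact k) * (L ^^ k) a p q * K x y p q)" by simp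
    also have "\<dots> = (\<Sum>k. \<Sum>p\<in>{1..N}. \<Sum>q\<in>{1..N}. complex_of_real (t ^ k / fact k) * (L ^^ k) a p q * K x y p q)"
      by (rule suminf_sum[symmetric]) (intro summable_sum sm)
    finally show ?thesis .
  qed
  also have "\<dots> = (\<Sum>k. complex_of_real (t ^ k / fact k) * (L ^^ k) (L a) x y)"
  proof -
    have "(\<Sum>p\<in>{1..N}. \<Sum>q\<in>{1..N}. complex_of_real (t ^ k / fact k) * (L ^^ k) a p q * K x y p q)
        = complex_of_real (t ^ k / fact k) * (L ^^ k) (L a) x y" for k
    proof -
      have "(L ^^ k) (L a) = L ((L ^^ k) a)" by (simp add: funpow_swap1)
      then have "(L ^^ k) (L a) x y = (\<Sum>p\<in>{1..N}. \<Sum>q\<in>{1..N}. (L ^^ k) a p q * K x y p q)"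
        using lgen_rep[OF Lk_supported[OF sa]] by simp
      then show ?thesis by (simp add: sum_distrib_left mult.assoc)
    qed
    then show ?thesis by simp
  qed
  also have "\<dots> = TT t (L a) x y" by (simp add: Tsg_def)
  finally show ?thesis .
qed

lemma Tsg_deriv: assumes sa: "supported N a"
  shows "((\<lambda>t. TT t a x y) has_vector_derivative TT t (L a) x y) (at t within S)"
proof -
  define c where "c n = (L ^^ n) a x y / fact n" for n
  have eq: "TT r a x y = (\<Sum>n. c n * (complex_of_real r) ^ n)" for r
    unfolding Tsg_def c_def by (intro suminf_cong) (simp add: field_simps)
  have eq2: "TT t (L a) x y = (\<Sum>n. diffs c n * (complex_of_real t) ^ n)"
  proof -
    have "diffs c n = (L ^^ n) (L a) x y / fact n" for n
    proof -
      have "(L ^^ Suc n) a = (L ^^ n) (L a)" by (simp add: funpow_Suc_right del: funpow.simps)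
      moreover have "(fact (Suc n) :: complex) = of_nat (Suc n) * fact n" by (simp add: fact_Suc)
      moreover have "(of_nat (Suc n) :: complex) \<noteq> 0" by (simp only: of_nat_eq_0_iff) 
      ultimately show ?thesis unfolding diffs_def c_def
        by (metis times_divide_eq_right nonzero_mult_divide_mult_cancel_left)
    qed
    then show ?thesis unfolding Tsg_def by (intro suminf_cong) (simp add: field_simps)
  qed
  have sm: "summable (\<lambda>n. c n * z ^ n)" for z :: complex
  proof (rule summable_comparison_test'[where N = 0])
    show "summable (\<lambda>n. nm a * ((cmod z * \<kappa>) ^ n / fact n))"
      using exp_real_sums[of "cmod z * \<kappa>"] by (intro summable_mult sums_summable)
  next
    fix n :: nat
    have "norm (c n * z ^ n) = cmod ((L ^^ n) a x y) * (cmod z ^ n / fact n)" by (simp add: c_def norm_mult norm_divide norm_power)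
    also have "\<dots> \<le> (\<kappa> ^ n * nm a) * (cmod z ^ n / fact n)" by (intro mult_right_mono Lk_bound[OF sa]) auto
    also have "\<dots> = nm a * ((cmod z * \<kappa>) ^ n / fact n)" by (simp add: power_mult_distrib)
    finally show "norm (c n * z ^ n) \<le> nm a * ((cmod z * \<kappa>) ^ n / fact n)" .
  qed
  have "((\<lambda>z. \<Sum>n. c n * z ^ n) has_field_derivative (\<Sum>n. diffs c n * (complex_of_real t) ^ n)) (at (complex_of_real t))"
    by (rule termdiffs_strong_converges_everywhere) (rule sm)
  from has_vector_derivative_real_field[OF this, of S]
  show ?thesis unfolding eq eq2 .
qed

lemma Tsg_cont: "supported N a \<Longrightarrow> continuous_on S (\<lambda>t. TT t a x y)"
  by (intro continuous_at_imp_continuous_on ballI has_vector_derivative_continuous[OF Tsg_deriv])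

lemma Tsg_lim: "supported N a \<Longrightarrow> ((\<lambda>t. TT t a x y) \<longlongrightarrow> 0) at_top"
proof -
  assume sa: "supported N a"
  have "eventually (\<lambda>t. norm (TT t a x y) \<le> cB * nm a * exp (- crate * t)) at_top"
    using eventually_ge_at_top[of 0] by eventually_elim (rule Tsg_bound[OF sa])
  then show ?thesis by (rule Lim_null_comparison) (rule exp_decay[OF crate_pos])
qed

lemma Tsg_integrable: "supported N a \<Longrightarrow> (\<lambda>t. TT t a x y) integrable_on {0..}"
  by (rule decay_integrable[OF Tsg_cont Tsg_bound crate_pos])

lemma Tsg_int: assumes sa: "supported N a" shows "((\<lambda>t. TT t (L a) x y) has_integral (- a x y)) {0..}"
proof -
  have "((\<lambda>t. TT t (L a) x y) has_integral (- TT 0 a x y)) {0..}"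
    by (rule improper_FTC[OF Tsg_deriv[OF sa] Tsg_bound[OF lgen_supported[OF sa]] crate_pos Tsg_lim[OF sa]])
  then show ?thesis by (simp add: Tsg_zero)
qed

definition Intg :: "cmat \<Rightarrow> cmat" where "Intg a = (\<lambda>x y. integral {0..} (\<lambda>t. TT t a x y))"

lemma Intg_supported: "supported N a \<Longrightarrow> supported N (Intg a)"
  using Tsg_supported unfolding supported_def Intg_def by auto

lemma L_Intg: assumes sa: "supported N a" shows "L (Intg a) = (\<lambda>x y. - a x y)"
proof (intro ext)
  fix x y
  have "L (Intg a) x y = (\<Sum>p\<in>{1..N}. \<Sum>q\<in>{1..N}. Intg a p q * K x y p q)"
    by (rule lgen_rep[OF Intg_supported[OF sa]])
  also have "\<dots> = (\<Sum>p\<in>{1..N}. \<Sum>q\<in>{1..N}. integral {0..} (\<lambda>t. TT t a p q * K x y p q))"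
    unfolding Intg_def by (intro sum.cong refl integral_mult_left[symmetric])
  also have "\<dots> = integral {0..} (\<lambda>t. \<Sum>p\<in>{1..N}. \<Sum>q\<in>{1..N}. TT t a p q * K x y p q)"
  proof -
    have i: "(\<lambda>t. TT t a p q * K x y p q) integrable_on {0..}" for p q
      by (intro integrable_on_mult_left Tsg_integrable[OF sa])
    have "(\<Sum>q\<in>{1..N}. integral {0..} (\<lambda>t. TT t a p q * K x y p q)) = integral {0..} (\<lambda>t. \<Sum>q\<in>{1..N}. TT t a p q * K x y p q)" for p
      by (rule integral_sum[symmetric]) (auto intro: i)
    then have "(\<Sum>p\<in>{1..N}. \<Sum>q\<in>{1..N}. integral {0..} (\<lambda>t. TT t a p q * K x y p q))
        = (\<Sum>p\<in>{1..N}. integral {0..} (\<lambda>t. \<Sum>q\<in>{1..N}. TT t a p q * K x y p q))" by simp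
    also have "\<dots> = integral {0..} (\<lambda>t. \<Sum>p\<in>{1..N}. \<Sum>q\<in>{1..N}. TT t a p q * K x y p q)"
      by (rule integral_sum[symmetric]) (auto intro!: integrable_sum i)
    finally show ?thesis .
  qed
  also have "\<dots> = integral {0..} (\<lambda>t. TT t (L a) x y)"
  proof (intro integral_cong)
    fix t
    show "(\<Sum>p\<in>{1..N}. \<Sum>q\<in>{1..N}. TT t a p q * K x y p q) = TT t (L a) x y"
      using lgen_rep[OF Tsg_supported[OF sa], of t x y] Tsg_comm[OF sa, of t x y] by simp
  qed
  also have "\<dots> = - a x y" using Tsg_int[OF sa] by (rule integral_unique)
  finally show "L (Intg a) x y = - a x y" .
qed

lemma lgen_inj: assumes "supported N a" "supported N b" "L a = L b" shows "a = b"
proof (rule ccontr)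
  assume "a \<noteq> b"
  then obtain i j where ij: "a i j - b i j \<noteq> 0" by (auto simp: fun_eq_iff)
  have sc: "supported N (\<lambda>x y. a x y - b x y)" using assms by (auto simp: supported_def)
  have "L (\<lambda>x y. a x y - b x y) x y = 0 * (a x y - b x y)" for x y using assms(3) by (simp add: lgen_diff)
  from eigen_neg[OF sc this ij] show False by simp
qed

lemma linv_eq: assumes sy: "supported N y" shows "linv N v zl zr \<beta> y = (\<lambda>x z. - Intg y x z)"
  unfolding linv_def
proof (rule the_equality)
  show "supported N (\<lambda>x z. - Intg y x z) \<and> L (\<lambda>x z. - Intg y x z) = y"
    using Intg_supported[OF sy] L_Intg[OF sy] lgen_smult[of "-1" "Intg y"]
    by (auto simp: supported_def)
next
  fix b assume b: "supported N b \<and> L b = y"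
  have "supported N (\<lambda>x z. - Intg y x z) \<and> L (\<lambda>x z. - Intg y x z) = y"
    using Intg_supported[OF sy] L_Intg[OF sy] lgen_smult[of "-1" "Intg y"]
    by (auto simp: supported_def)
  then show "b = (\<lambda>x z. - Intg y x z)" using b lgen_inj by metis
qed

lemma double_delta2: "finite A \<Longrightarrow> finite B \<Longrightarrow>
   (\<Sum>p\<in>A. \<Sum>q\<in>B. if p = x \<and> q = y then g p q else 0) = (if x \<in> A \<and> y \<in> B then g x y else (0::complex))"
  using double_delta[of A B x y g] by (simp add: eq_commute[of _ x] eq_commute[of _ y])

lemma lin1: "-(d::complex) - e = -c \<Longrightarrow> d = c - e"
proof -
  assume h: "-d - e = -c"
  have "d = - (-d - e) - e" by simp
  also have "\<dots> = c - e" unfolding h by simp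
  finally show ?thesis .
qed

lemma proj_supported: "n \<in> {1..N} \<Longrightarrow> supported N (proj n)" by (auto simp: supported_def proj_def)

lemma hrow1: "(\<Sum>k\<in>{1..N}. hmat N v 1 k * F k j) = of_real (v 1) * F 1 j - F 2 j"
proof -
  have "(\<Sum>k\<in>{1..N}. hmat N v 1 k * F k j) = (\<Sum>k\<in>{1..N}. (if k = 1 then of_real (v 1) * F 1 j else 0) + (if k = 2 then - F 2 j else 0))"
    using N2 by (intro sum.cong refl) (auto simp: hmat_def)
  also have "\<dots> = of_real (v 1) * F 1 j - F 2 j" using N2 by (simp add: sum.distrib)
  finally show ?thesis .
qed

lemma hcol1: "(\<Sum>k\<in>{1..N}. F i k * hmat N v k 1) = F i 1 * of_real (v 1) - F i 2"
proof -
  have "(\<Sum>k\<in>{1..N}. F i k * hmat N v k 1) = (\<Sum>k\<in>{1..N}. (if k = 1 then F i 1 * of_real (v 1) else 0) + (if k = 2 then - F i 2 else 0))"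
    using N2 by (intro sum.cong refl) (auto simp: hmat_def)
  also have "\<dots> = F i 1 * of_real (v 1) - F i 2" using N2 by (simp add: sum.distrib)
  finally show ?thesis .
qed

lemma main_locale:
  assumes zl_eq: "zl = ainl + aoutl" and zr_eq: "zr = ainr + aoutr"
  shows "complex_of_real (current N v zl zr \<beta> ainl ainr)
           = complex_of_real (4 * (ainl * aoutr - aoutl * ainr))
             * integral {0..} (\<lambda>t. Tsg N v zl zr \<beta> t (proj N) 1 1)
       \<and> complex_of_real (4 * (ainl * aoutr - aoutl * ainr))
             * integral {0..} (\<lambda>t. Tsg N v zl zr \<beta> t (proj N) 1 1)
           = - complex_of_real (4 * (ainl * aoutr - aoutl * ainr))
             * linv N v zl zr \<beta> (proj N) 1 1"
proof -
  let ?A = "{1..N}"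
  have N1: "1 \<in> ?A" "N \<in> ?A" "2 \<in> ?A" "N \<noteq> 1" "N \<noteq> 2 \<or> N = 2" using N2 by auto
  define src where "src = (\<lambda>p q. complex_of_real (2 * ainl) * proj 1 p q + complex_of_real (2 * ainr) * proj N p q)"
  have ssrc: "supported N src" using N2 by (auto simp: supported_def src_def proj_def)
  define R where "R = Intg src"
  define X where "X = Intg (proj N)"
  define Y where "Y = Intg (proj 1)"
  have sR: "supported N R" "supported N X" "supported N Y"
    using Intg_supported ssrc proj_supported N1 by (auto simp: R_def X_def Y_def)
  have LR: "L R = (\<lambda>x y. - src x y)" unfolding R_def by (rule L_Intg[OF ssrc])
  have LX: "L X = (\<lambda>x y. - proj N x y)" unfolding X_def by (rule L_Intg[OF proj_supported[OF N1(2)]])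
  have LY: "L Y = (\<lambda>x y. - proj 1 x y)" unfolding Y_def by (rule L_Intg[OF proj_supported[OF N1(1)]])
  have Rdec: "R = (\<lambda>x y. complex_of_real (2 * ainl) * Y x y + complex_of_real (2 * ainr) * X x y)"
  proof (rule lgen_inj[OF sR(1)])
    show "supported N (\<lambda>x y. complex_of_real (2 * ainl) * Y x y + complex_of_real (2 * ainr) * X x y)"
      using sR by (auto simp: supported_def)
    show "L R = L (\<lambda>x y. complex_of_real (2 * ainl) * Y x y + complex_of_real (2 * ainr) * X x y)"
      unfolding lgen_add lgen_smult LR LX LY src_def by (simp add: fun_eq_iff)
  qed
  have herm: "R 1 2 = cnj (R 2 1)"
  proof -
    have sRs: "supported N (\<lambda>x y. cnj (R y x))" using sR by (auto simp: supported_def)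
    have "L (\<lambda>x y. cnj (R y x)) = L R"
      unfolding lgen_adj[OF sR(1)] LR by (auto simp: fun_eq_iff src_def proj_def)
    then have "(\<lambda>x y. cnj (R y x)) = R" by (rule lgen_inj[OF sRs sR(1)])
    then show ?thesis by (metis complex_cnj_cnj)
  qed
  have e11: "- \<i> * (R 1 2 - R 2 1) - 2 * of_real zl * R 1 1 = - of_real (2 * ainl)"
  proof -
    have "L R 1 1 = - \<i> * ((of_real (v 1) * R 1 1 - R 2 1) - (R 1 1 * of_real (v 1) - R 1 2)) - (dd 1 + dd 1) * R 1 1"
      using lgen_entry[OF N1(1) N1(1), of R, unfolded hrow1 hcol1] by simp
    moreover have "dd 1 = of_real zl" using N1 by (simp add: dd_def)
    moreover have "L R 1 1 = - of_real (2 * ainl)" using N1 by (simp add: LR src_def proj_def)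
    ultimately show ?thesis by (simp add: algebra_simps)
  qed
  have trY: "of_real zl * Y 1 1 + of_real zr * Y N N = 1 / 2"
  proof -
    have "(\<Sum>i\<in>?A. L Y i i) = -1" using N1 by (simp add: LY proj_def sum_negf)
    then have "-1 = -2 * (of_real zl * Y 1 1 + of_real zr * Y N N)" using lgen_trace[OF sR(3)] by simp
    then have "2 * (of_real zl * Y 1 1 + of_real zr * Y N N) = 1" by (simp only: neg_equal_iff_equal mult_minus_left)
    then show ?thesis by (simp add: field_simps)
  qed
  have sym: "Y N N = X 1 1"
  proof -
    have "(\<Sum>i\<in>?A. \<Sum>j\<in>?A. L X i j * Y i j) = (\<Sum>i\<in>?A. \<Sum>j\<in>?A. X i j * L Y i j)"
      by (rule lgen_bilin[OF sR(2) sR(3)])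
    moreover have "(\<Sum>i\<in>?A. \<Sum>j\<in>?A. L X i j * Y i j) = - Y N N"
      unfolding LX proj_def using N1 by (simp add: sum_negf double_delta2)
    moreover have "(\<Sum>i\<in>?A. \<Sum>j\<in>?A. X i j * L Y i j) = - X 1 1"
      unfolding LY proj_def using N1 by (simp add: sum_negf double_delta2)
    ultimately show ?thesis by simp
  qed
  have curr: "complex_of_real (current N v zl zr \<beta> ainl ainr) = complex_of_real (2 * Im (R 2 1))"
    by (simp add: current_def R_def Rinf_def Intg_def src_def)
  have imR: "complex_of_real (2 * Im (R 2 1)) = \<i> * (R 1 2 - R 2 1)"
    unfolding herm by (simp add: complex_eq_iff)
  have X11: "integral {0..} (\<lambda>t. Tsg N v zl zr \<beta> t (proj N) 1 1) = X 1 1" by (simp add: X_def Intg_def)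
  have linvN: "linv N v zl zr \<beta> (proj N) 1 1 = - X 1 1"
    using linv_eq[OF proj_supported[OF N1(2)]] by (simp add: X_def)
  have R11: "R 1 1 = complex_of_real (2 * ainl) * Y 1 1 + complex_of_real (2 * ainr) * X 1 1"
    using Rdec by (simp add: fun_eq_iff)
  have "complex_of_real (current N v zl zr \<beta> ainl ainr) = of_real (2 * ainl) - 2 * of_real zl * R 1 1"
  proof -
    have "- (\<i> * (R 1 2 - R 2 1)) - 2 * of_real zl * R 1 1 = - of_real (2 * ainl)" using e11 by simp
    from lin1[OF this] show ?thesis using curr imR by simp
  qed
  also have "\<dots> = complex_of_real (4 * (ainl * aoutr - aoutl * ainr)) * X 1 1"
  proof -
    have f: "of_real zl * Y 1 1 = 1 / 2 - of_real zr * X 1 1" using trY sym by (simp add: algebra_simps)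
    have "of_real (2 * ainl) - 2 * of_real zl * R 1 1
        = of_real (2 * ainl) - 4 * of_real ainl * (of_real zl * Y 1 1) - 4 * of_real ainr * of_real zl * X 1 1"
      unfolding R11 by (simp add: algebra_simps)
    also have "\<dots> = of_real (2 * ainl) - 4 * of_real ainl * (1 / 2 - of_real zr * X 1 1) - 4 * of_real ainr * of_real zl * X 1 1"
      unfolding f ..
    also have "\<dots> = 4 * (of_real ainl * of_real zr - of_real ainr * of_real zl) * X 1 1"
      by (simp add: algebra_simps)
    also have "\<dots> = complex_of_real (4 * (ainl * aoutr - aoutl * ainr)) * X 1 1"
      unfolding zl_eq zr_eq by (simp add: algebra_simps)
    finally show ?thesis .
  qed
  finally have J: "complex_of_real (current N v zl zr \<beta> ainl ainr) = complex_of_real (4 * (ainl * aoutr - aoutl * ainr)) * X 1 1" .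
  show ?thesis unfolding X11 linvN
  proof (rule conjI)
    show "complex_of_real (current N v zl zr \<beta> ainl ainr) = complex_of_real (4 * (ainl * aoutr - aoutl * ainr)) * X 1 1" by (rule J)
    show "complex_of_real (4 * (ainl * aoutr - aoutl * ainr)) * X 1 1 = - complex_of_real (4 * (ainl * aoutr - aoutl * ainr)) * - X 1 1"
      by (simp only: minus_mult_minus)
  qed
qed

end

theorem theorem2p2:
  fixes N :: nat and v :: "nat \<Rightarrow> real"
    and ainl aoutl ainr aoutr \<beta> :: real
  assumes "N \<ge> 2"
    and "bounded (range v)"
    and "ainl \<ge> 0" "aoutl \<ge> 0" "ainr \<ge> 0" "aoutr \<ge> 0" "\<beta> \<ge> 0"
    and "(ainl + aoutl) + (ainr + aoutr) > 0"
  shows "complex_of_real (current N v (ainl + aoutl) (ainr + aoutr) \<beta> ainl ainr)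
           = complex_of_real (4 * (ainl * aoutr - aoutl * ainr))
             * integral {0..} (\<lambda>t. Tsg N v (ainl + aoutl) (ainr + aoutr) \<beta> t (proj N) 1 1)
       \<and> complex_of_real (4 * (ainl * aoutr - aoutl * ainr))
             * integral {0..} (\<lambda>t. Tsg N v (ainl + aoutl) (ainr + aoutr) \<beta> t (proj N) 1 1)
           = - complex_of_real (4 * (ainl * aoutr - aoutl * ainr))
             * linv N v (ainl + aoutl) (ainr + aoutr) \<beta> (proj N) 1 1"
proof -
  interpret setting N v "ainl + aoutl" "ainr + aoutr" \<beta>
    by unfold_locales (use assms in auto)
  show ?thesis by (rule main_locale) auto
qed

end
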